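(* Let $\Gamma_1,\Gamma_2\subset SO(6)$ be the diagonal groups $\Gamma_1=\{(1,1,1,1,1,1),(-1,-1,-1,-1,-1,-1),(-1,-1,1,1,1,1),(-1,1,-1,1,1,1),(1,-1,-1,1,1,1),(-1,1,1,-1,-1,-1),(1,-1,1,-1,-1,-1),(1,1,-1,-1,-1,-1)\}$, $\Gamma_2=\{(1,1,1,1,1,1),(-1,-1,-1,-1,-1,-1),(-1,-1,1,1,1,1),(1,1,-1,-1,1,1),(1,1,1,1,-1,-1),(-1,-1,-1,-1,1,1),(-1,-1,1,1,-1,-1),(1,1,-1,-1,-1,-1)\}$. Let $M=SO(6)/\Gamma_1$ with the metric induced from a biinvariant metric on $SO(6)$, and let $\Gamma_i$ act on $M$ by left multiplication. Then $\mathcal O_1:=\Gamma_1\backslash M$ and $\mathcal O_2:=\Gamma_2\backslash M$ are isospectral; the maximal isotropy order of points in $\mathcal O_1$ is $4$ and in $\mathcal O_2$ it is $2$.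
   Context: A non-effective action of $\Gamma_i$ is replaced by the effective action of $\Gamma_i$ modulo its kernel (here the kernel is $\{\pm I_6\}$). For a good orbifold the isotropy order of a point is the order of the stabilizer in the effectively acting group; isospectral means equal Laplace spectra on functions with multiplicities, where multiplicity of $\lambda$ is $\dim E_\lambda(M)^\Gamma$. *)

theory Defs
  imports "HOL-Analysis.Analysis" "HOL-Library.Numeral_Type" "HOL-Library.Function_Algebras"
begin

type_synonym mat6 = "real^6^6"

definition SO6 :: "mat6 set" where
  "SO6 = {A. transpose A ** A = mat 1 \<and> det A = 1}"

definition diagm :: "real list \<Rightarrow> mat6" where
  "diagm xs = (\<chi> i j. if i = j then (vector xs :: real^6) $ i else 0)"

definition Gamma1 :: "mat6 set" where
  "Gamma1 = diagm ` {[1,1,1,1,1,1],[-1,-1,-1,-1,-1,-1],[-1,-1,1,1,1,1],[-1,1,-1,1,1,1],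
     [1,-1,-1,1,1,1],[-1,1,1,-1,-1,-1],[1,-1,1,-1,-1,-1],[1,1,-1,-1,-1,-1]}"

definition Gamma2 :: "mat6 set" where
  "Gamma2 = diagm ` {[1,1,1,1,1,1],[-1,-1,-1,-1,-1,-1],[-1,-1,1,1,1,1],[1,1,-1,-1,1,1],
     [1,1,1,1,-1,-1],[-1,-1,-1,-1,1,1],[-1,-1,1,1,-1,-1],[1,1,-1,-1,-1,-1]}"

definition mpow :: "mat6 \<Rightarrow> nat \<Rightarrow> mat6" where
  "mpow X k = ((\<lambda>Y. X ** Y) ^^ k) (mat 1)"

definition mexp :: "mat6 \<Rightarrow> mat6" where
  "mexp X = (\<Sum>k. (1 / (fact k :: real)) *\<^sub>R mpow X k)"

text \<open>Orthonormal basis of so(6) w.r.t. the bi-invariant metric <X,Y> = tr(X^T Y)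
  (the metric induced on SO(6) from the Euclidean/Frobenius metric on the 6x6 matrices).\<close>
definition munit :: "6 \<Rightarrow> 6 \<Rightarrow> mat6" where
  "munit i j = (\<chi> a b. if a = i \<and> b = j then 1 else 0)"

definition skewbasis :: "6 \<Rightarrow> 6 \<Rightarrow> mat6" where
  "skewbasis i j = (1 / sqrt 2) *\<^sub>R (munit i j - munit j i)"

definition pderiv :: "'a::euclidean_space \<Rightarrow> ('a \<Rightarrow> real) \<Rightarrow> 'a \<Rightarrow> real" where
  "pderiv v f x = deriv (\<lambda>t. f (x + t *\<^sub>R v)) 0"

fun iter_pderiv :: "'a::euclidean_space list \<Rightarrow> ('a \<Rightarrow> real) \<Rightarrow> 'a \<Rightarrow> real" where
  "iter_pderiv [] f = f"
| "iter_pderiv (v # vs) f = pderiv v (iter_pderiv vs f)"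

definition Cinf_on :: "'a::euclidean_space set \<Rightarrow> ('a \<Rightarrow> real) \<Rightarrow> bool" where
  "Cinf_on U f \<longleftrightarrow> open U \<and> (\<forall>vs \<in> lists Basis. continuous_on U (iter_pderiv vs f) \<and>
      (\<forall>v \<in> Basis. \<forall>x \<in> U. (\<lambda>t. iter_pderiv vs f (x + t *\<^sub>R v)) differentiable (at 0)))"

text \<open>Smooth functions on the embedded submanifold SO(6): restrictions of smooth functions
  defined on an open neighbourhood.  Functions are normalised to vanish off SO(6).\<close>
definition smooth_SO6 :: "(mat6 \<Rightarrow> real) \<Rightarrow> bool" where
  "smooth_SO6 f \<longleftrightarrow> (\<exists>U F. SO6 \<subseteq> U \<and> Cinf_on U F \<and> (\<forall>g\<in>SO6. f g = F g))
      \<and> (\<forall>x. x \<notin> SO6 \<longrightarrow> f x = 0)"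

text \<open>(Nonnegative) Laplace--Beltrami operator of the bi-invariant metric:
  Delta f (g) = - sum over an orthonormal basis X of so(6) of d^2/dt^2 f(g exp(tX)) at t = 0.\<close>
definition laplace :: "(mat6 \<Rightarrow> real) \<Rightarrow> mat6 \<Rightarrow> real" where
  "laplace f g = - (\<Sum>(i,j) \<in> {(i,j). i < j}.
       deriv (deriv (\<lambda>t. f (g ** mexp (t *\<^sub>R skewbasis i j)))) 0)"

text \<open>Functions on the orbifold Gamma \ M, M = SO(6)/Gamma1 (left cosets g Gamma1),
  Gamma acting by left multiplication: functions on SO(6) with f(a g b) = f(g).\<close>
definition invariant :: "mat6 set \<Rightarrow> (mat6 \<Rightarrow> real) \<Rightarrow> bool" where
  "invariant \<Gamma> f \<longleftrightarrow> (\<forall>a\<in>\<Gamma>. \<forall>g\<in>SO6. \<forall>b\<in>Gamma1. f (a ** g ** b) = f g)"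

definition eigenspace_orb :: "mat6 set \<Rightarrow> real \<Rightarrow> (mat6 \<Rightarrow> real) set" where
  "eigenspace_orb \<Gamma> lam = {f. smooth_SO6 f \<and> invariant \<Gamma> f \<and>
       (\<forall>g\<in>SO6. laplace f g = lam * f g)}"

definition multiplicity :: "mat6 set \<Rightarrow> real \<Rightarrow> nat" where
  "multiplicity \<Gamma> lam = vector_space.dim (\<lambda>c (f::mat6 \<Rightarrow> real) x. c * f x) (eigenspace_orb \<Gamma> lam)"

definition isospectral :: "mat6 set \<Rightarrow> mat6 set \<Rightarrow> bool" where
  "isospectral \<Gamma> \<Gamma>' \<longleftrightarrow> (\<forall>lam. multiplicity \<Gamma> lam = multiplicity \<Gamma>' lam)"

definition act_kernel :: "mat6 set \<Rightarrow> mat6 set" where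
  "act_kernel \<Gamma> = {a\<in>\<Gamma>. \<forall>g\<in>SO6. \<exists>b\<in>Gamma1. a ** g = g ** b}"

definition stab :: "mat6 set \<Rightarrow> mat6 \<Rightarrow> mat6 set" where
  "stab \<Gamma> g = {a\<in>\<Gamma>. \<exists>b\<in>Gamma1. a ** g = g ** b}"

text \<open>Isotropy order: order of the stabiliser in the effectively acting group Gamma / kernel.\<close>
definition isotropy_order :: "mat6 set \<Rightarrow> mat6 \<Rightarrow> nat" where
  "isotropy_order \<Gamma> g = card ((\<lambda>a. (\<lambda>k. a ** k) ` act_kernel \<Gamma>) ` stab \<Gamma> g)"

definition max_isotropy :: "mat6 set \<Rightarrow> nat" where
  "max_isotropy \<Gamma> = Max (isotropy_order \<Gamma> ` SO6)"

end

theory Submission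
  imports Defs
begin


lemma exhaust_6:
  fixes x :: 6
  shows "x = 1 \<or> x = 2 \<or> x = 3 \<or> x = 4 \<or> x = 5 \<or> x = 6"
proof (induct x)
  case (of_int z)
  then have "z = 0 \<or> z = 1 \<or> z = 2 \<or> z = 3 \<or> z = 4 \<or> z = 5" by fastforce
  then show ?case 
    apply (elim disjE)
    apply simp_all
    done
qed

lemma forall_6: "(\<forall>i::6. P i) \<longleftrightarrow> P 1 \<and> P 2 \<and> P 3 \<and> P 4 \<and> P 5 \<and> P 6"
  by (metis exhaust_6)

lemma UNIV_6: "(UNIV::6 set) = {1,2,3,4,5,6}"
  using exhaust_6 by auto

lemma sum_6: "sum f (UNIV::6 set) = f 1 + f 2 + f 3 + f 4 + f 5 + f 6"
  unfolding UNIV_6 by (simp add: add.assoc)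

definition dgs :: "6 set \<Rightarrow> mat6" where
  "dgs A = (\<chi> i j. if i = j then (if i \<in> A then -1 else 1) else 0)"

lemma dgs_left: "(dgs A ** M) $ i $ j = (if i \<in> A then -1 else 1) * M $ i $ j"
proof -
  have "(dgs A ** M) $ i $ j = (\<Sum>k\<in>UNIV. (if i = k then (if i \<in> A then -1 else 1) else 0) * M $ k $ j)"
    unfolding dgs_def matrix_matrix_mult_def by simp
  also have "\<dots> = (\<Sum>k\<in>UNIV. (if i = k then (if i \<in> A then -1 else 1) * M $ k $ j else 0))"
    by (rule sum.cong) auto
  also have "\<dots> = (if i \<in> A then -1 else 1) * M $ i $ j" by simp
  finally show ?thesis .
qed

lemma dgs_right: "(M ** dgs A) $ i $ j = M $ i $ j * (if j \<in> A then -1 else 1)"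
proof -
  have "(M ** dgs A) $ i $ j = (\<Sum>k\<in>UNIV. M $ i $ k * (if k = j then (if k \<in> A then -1 else 1) else 0))"
    unfolding dgs_def matrix_matrix_mult_def by simp
  also have "\<dots> = (\<Sum>k\<in>UNIV. (if k = j then M $ i $ k * (if k \<in> A then -1 else 1) else 0))"
    by (rule sum.cong) auto
  also have "\<dots> = M $ i $ j * (if j \<in> A then -1 else 1)" by simp
  finally show ?thesis .
qed

lemma dgs_nth: "dgs A $ i $ j = (if i = j then (if i \<in> A then -1 else 1) else 0)"
  unfolding dgs_def by simp

lemma dgs_mult: "dgs A ** dgs B = dgs ((A - B) \<union> (B - A))"
  by (simp add: vec_eq_iff dgs_left dgs_nth)

lemma dgs_eq_iff: "dgs A = dgs B \<longleftrightarrow> A = B"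
proof
  assume "dgs A = dgs B"
  then have "\<forall>i. dgs A $ i $ i = dgs B $ i $ i" by simp
  then show "A = B" by (auto simp: dgs_nth split: if_splits)
qed simp

lemma "diagm [-1,1,1,-1,-1,-1] = dgs {1,4,5,6}"
  unfolding dgs_def diagm_def by (simp add: vec_eq_iff forall_6 vector_def)


definition Pr1 :: "6 set \<Rightarrow> bool" where
  "Pr1 A \<longleftrightarrow> (4 \<in> A \<longleftrightarrow> 5 \<in> A) \<and> (5 \<in> A \<longleftrightarrow> 6 \<in> A) \<and> (1 \<in> A \<longleftrightarrow> (2 \<in> A \<longleftrightarrow> (3 \<in> A \<longleftrightarrow> 4 \<in> A)))"

definition Pr2 :: "6 set \<Rightarrow> bool" where
  "Pr2 A \<longleftrightarrow> (1 \<in> A \<longleftrightarrow> 2 \<in> A) \<and> (3 \<in> A \<longleftrightarrow> 4 \<in> A) \<and> (5 \<in> A \<longleftrightarrow> 6 \<in> A)"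

lemma dgs_diagm: "dgs A = diagm (map (\<lambda>i. if i \<in> A then -1 else 1) [1,2,3,4,5,6])"
  unfolding dgs_def diagm_def by (simp add: vec_eq_iff forall_6 vector_def)

lemma diagm_dgs: "diagm [a1,a2,a3,a4,a5,a6] = dgs A" 
  if "a1 = (if 1 \<in> A then -1 else 1)" "a2 = (if 2 \<in> A then -1 else 1)" "a3 = (if 3 \<in> A then -1 else 1)"
     "a4 = (if 4 \<in> A then -1 else 1)" "a5 = (if 5 \<in> A then -1 else 1)" "a6 = (if 6 \<in> A then -1 else 1)"
  using that by (simp add: dgs_diagm)

lemma Gamma1_eq: "Gamma1 = dgs ` {A. Pr1 A}"
proof
  show "Gamma1 \<subseteq> dgs ` {A. Pr1 A}"
    unfolding Gamma1_def
    apply (auto simp: image_iff)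
    apply (rule exI[of _ "{}"], rule conjI, simp add: Pr1_def, rule diagm_dgs, simp_all)
    apply (rule exI[of _ "UNIV"], rule conjI, simp add: Pr1_def, rule diagm_dgs, simp_all)
    apply (rule exI[of _ "{1,2}"], rule conjI, simp add: Pr1_def, rule diagm_dgs, simp_all)
    apply (rule exI[of _ "{1,3}"], rule conjI, simp add: Pr1_def, rule diagm_dgs, simp_all)
    apply (rule exI[of _ "{2,3}"], rule conjI, simp add: Pr1_def, rule diagm_dgs, simp_all)
    apply (rule exI[of _ "{1,4,5,6}"], rule conjI, simp add: Pr1_def, rule diagm_dgs, simp_all)
    apply (rule exI[of _ "{2,4,5,6}"], rule conjI, simp add: Pr1_def, rule diagm_dgs, simp_all)
    apply (rule exI[of _ "{3,4,5,6}"], rule conjI, simp add: Pr1_def, rule diagm_dgs, simp_all)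
    done
  show "dgs ` {A. Pr1 A} \<subseteq> Gamma1"
  proof
    fix x assume "x \<in> dgs ` {A. Pr1 A}"
    then obtain A where A: "Pr1 A" "x = dgs A" by auto
    show "x \<in> Gamma1" unfolding A(2) dgs_diagm Gamma1_def
      using A(1) unfolding Pr1_def
      by (cases "1 \<in> A"; cases "2 \<in> A"; cases "3 \<in> A"; cases "4 \<in> A") auto
  qed
qed

lemma Gamma2_eq: "Gamma2 = dgs ` {A. Pr2 A}"
proof
  show "Gamma2 \<subseteq> dgs ` {A. Pr2 A}"
    unfolding Gamma2_def
    apply (auto simp: image_iff)
    apply (rule exI[of _ "{}"], rule conjI, simp add: Pr2_def, rule diagm_dgs, simp_all)
    apply (rule exI[of _ "UNIV"], rule conjI, simp add: Pr2_def, rule diagm_dgs, simp_all)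
    apply (rule exI[of _ "{1,2}"], rule conjI, simp add: Pr2_def, rule diagm_dgs, simp_all)
    apply (rule exI[of _ "{3,4}"], rule conjI, simp add: Pr2_def, rule diagm_dgs, simp_all)
    apply (rule exI[of _ "{5,6}"], rule conjI, simp add: Pr2_def, rule diagm_dgs, simp_all)
    apply (rule exI[of _ "{1,2,3,4}"], rule conjI, simp add: Pr2_def, rule diagm_dgs, simp_all)
    apply (rule exI[of _ "{1,2,5,6}"], rule conjI, simp add: Pr2_def, rule diagm_dgs, simp_all)
    apply (rule exI[of _ "{3,4,5,6}"], rule conjI, simp add: Pr2_def, rule diagm_dgs, simp_all)
    done
  show "dgs ` {A. Pr2 A} \<subseteq> Gamma2"
  proof
    fix x assume "x \<in> dgs ` {A. Pr2 A}"
    then obtain A where A: "Pr2 A" "x = dgs A" by auto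
    show "x \<in> Gamma2" unfolding A(2) dgs_diagm Gamma2_def
      using A(1) unfolding Pr2_def
      by (cases "1 \<in> A"; cases "3 \<in> A"; cases "5 \<in> A") auto
  qed
qed


lemma SO6_mult: "a \<in> SO6 \<Longrightarrow> b \<in> SO6 \<Longrightarrow> a ** b \<in> SO6"
  unfolding SO6_def
  by (simp add: matrix_transpose_mul det_mul matrix_mul_assoc)
     (metis matrix_mul_assoc matrix_mul_lid)

lemma SO6_right_inv: "a \<in> SO6 \<Longrightarrow> a ** transpose a = mat 1"
  unfolding SO6_def using matrix_left_right_inverse by blast

lemma SO6_transpose: "a \<in> SO6 \<Longrightarrow> transpose a \<in> SO6"
  using SO6_right_inv[of a] unfolding SO6_def by (simp add: det_transpose)

lemma SO6_mult_iff: assumes a: "a \<in> SO6" shows "(a ** x \<in> SO6 \<longleftrightarrow> x \<in> SO6)"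
proof
  assume "a ** x \<in> SO6"
  then have "transpose a ** (a ** x) \<in> SO6" using SO6_mult[OF SO6_transpose[OF a]] by blast
  moreover have "transpose a ** (a ** x) = x" using a by (simp add: matrix_mul_assoc SO6_def)
  ultimately show "x \<in> SO6" by simp
qed (rule SO6_mult[OF a])

lemma SO6_mult_iff2: assumes b: "b \<in> SO6" shows "(x ** b \<in> SO6 \<longleftrightarrow> x \<in> SO6)"
proof
  assume "x ** b \<in> SO6"
  then have "(x ** b) ** transpose b \<in> SO6" using SO6_mult[OF _ SO6_transpose[OF b]] by blast
  moreover have "(x ** b) ** transpose b = x" using b by (simp add: SO6_right_inv flip: matrix_mul_assoc)
  ultimately show "x \<in> SO6" by simp
qed (rule SO6_mult[OF _ b])

lemma mat1_SO6: "mat 1 \<in> SO6" unfolding SO6_def by simp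

lemma transpose_dgs: "transpose (dgs A) = dgs A"
  unfolding dgs_def transpose_def by (simp add: vec_eq_iff)

lemma dgs_empty: "dgs {} = mat 1"
  unfolding dgs_def mat_def by (simp add: vec_eq_iff)

lemma det_dgs: "det (dgs A) = (\<Prod>i\<in>UNIV. if i \<in> A then -1 else 1)"
  by (subst det_diagonal) (auto simp: dgs_def)

lemma prod_6: "prod f (UNIV::6 set) = f 1 * f 2 * f 3 * f 4 * f 5 * f 6"
  unfolding UNIV_6 by (simp add: mult.assoc)

lemma dgs_SO6: "dgs A \<in> SO6 \<longleftrightarrow> det (dgs A) = 1"
  unfolding SO6_def by (simp add: transpose_dgs dgs_mult dgs_empty)

lemma Pr1_SO6: "Pr1 A \<Longrightarrow> dgs A \<in> SO6"
  unfolding dgs_SO6 det_dgs prod_6 Pr1_def by auto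

lemma Pr2_SO6: "Pr2 A \<Longrightarrow> dgs A \<in> SO6"
  unfolding dgs_SO6 det_dgs prod_6 Pr2_def by auto

lemma Gamma1_SO6: "Gamma1 \<subseteq> SO6" using Pr1_SO6 by (auto simp: Gamma1_eq)
lemma Gamma2_SO6: "Gamma2 \<subseteq> SO6" using Pr2_SO6 by (auto simp: Gamma2_eq)

lemma mI_left: "dgs UNIV ** y = (-1) *\<^sub>R y"
  by (simp add: vec_eq_iff dgs_left)

lemma mI_right: "y ** dgs UNIV = (-1) *\<^sub>R y"
  by (simp add: vec_eq_iff dgs_right)

definition pm :: "(6 \<Rightarrow> 6) \<Rightarrow> mat6" where
  "pm p = (\<chi> i j. if j = p i then 1 else 0)"

lemma pm_left: "(pm p ** M) $ i $ j = M $ (p i) $ j"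
proof -
  have "(pm p ** M) $ i $ j = (\<Sum>k\<in>UNIV. (if k = p i then 1 else 0) * M $ k $ j)"
    unfolding pm_def matrix_matrix_mult_def by simp
  also have "\<dots> = (\<Sum>k\<in>UNIV. (if k = p i then M $ k $ j else 0))"
    by (rule sum.cong) auto
  also have "\<dots> = M $ (p i) $ j" by simp
  finally show ?thesis .
qed

lemma pm_nth: "pm p $ i $ j = (if j = p i then 1 else 0)"
  unfolding pm_def by simp

lemma pm_dgs: "pm p ** dgs A = dgs (p -` A) ** pm p"
  by (simp add: vec_eq_iff pm_left dgs_left dgs_nth pm_nth)

lemma pm_mult: "pm p ** pm q = pm (q \<circ> p)"
  by (simp add: vec_eq_iff pm_left pm_nth)

lemma pm_id: "pm id = mat 1"
  unfolding pm_def mat_def by (simp add: vec_eq_iff)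

lemma transpose_pm_inv: "(\<And>i. p (p i) = i) \<Longrightarrow> transpose (pm p) = pm p"
  unfolding pm_def transpose_def by (simp add: vec_eq_iff; metis)

lemma pm_rows: "pm p = (\<chi> i. (mat 1 :: mat6) $ p i)"
  unfolding pm_def mat_def by (simp add: vec_eq_iff)

lemma det_pm: "p permutes UNIV \<Longrightarrow> det (pm p) = of_int (sign p)"
  unfolding pm_rows by (simp add: det_permute_rows)

definition sg1 :: "6 \<Rightarrow> 6" where "sg1 = Transposition.transpose 1 4 \<circ> Transposition.transpose 2 5"
definition sg2 :: "6 \<Rightarrow> 6" where "sg2 = Transposition.transpose 3 6 \<circ> Transposition.transpose 1 2"

lemma sg1_simps: "sg1 1 = 4" "sg1 2 = 5" "sg1 3 = 3" "sg1 4 = 1" "sg1 5 = 2" "sg1 6 = 6"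
  by (simp_all add: sg1_def)
lemma sg2_simps: "sg2 1 = 2" "sg2 2 = 1" "sg2 3 = 6" "sg2 4 = 4" "sg2 5 = 5" "sg2 6 = 3"
  by (simp_all add: sg2_def)

lemma sg1_inv: "sg1 (sg1 i) = i" using exhaust_6[of i] by (auto simp: sg1_simps)
lemma sg2_inv: "sg2 (sg2 i) = i" using exhaust_6[of i] by (auto simp: sg2_simps)

lemma sg1_perm: "sg1 permutes UNIV" unfolding sg1_def
  by (intro permutes_compose permutes_swap_id) auto
lemma sg2_perm: "sg2 permutes UNIV" unfolding sg2_def
  by (intro permutes_compose permutes_swap_id) auto

lemma sign_sg1: "sign sg1 = 1" unfolding sg1_def
  by (subst sign_compose) (auto simp: sign_swap_id permutation_swap_id)
lemma sign_sg2: "sign sg2 = 1" unfolding sg2_def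
  by (subst sign_compose) (auto simp: sign_swap_id permutation_swap_id)

lemma pm_inv_SO6:
  assumes "p permutes UNIV" "sign p = 1" "\<And>i. p (p i) = i"
  shows "pm p \<in> SO6" "pm p ** pm p = mat 1" "transpose (pm p) = pm p"
proof -
  have pp: "p \<circ> p = id" using assms(3) by auto
  show "pm p ** pm p = mat 1" by (simp add: pm_mult pp pm_id)
  moreover show "transpose (pm p) = pm p" using assms(3) by (rule transpose_pm_inv)
  ultimately show "pm p \<in> SO6" unfolding SO6_def using assms by (simp add: det_pm)
qed

lemmas pm1 = pm_inv_SO6[OF sg1_perm sign_sg1 sg1_inv]
lemmas pm2 = pm_inv_SO6[OF sg2_perm sign_sg2 sg2_inv]


abbreviation mI :: mat6 where "mI \<equiv> dgs UNIV"

lemma mI_dgs: "mI ** dgs A = dgs (- A)"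
  by (simp add: dgs_mult Compl_eq_Diff_UNIV)

lemma Pr1_compl: "Pr1 A \<Longrightarrow> Pr1 (- A)" unfolding Pr1_def by auto
lemma Pr2_compl: "Pr2 A \<Longrightarrow> Pr2 (- A)" unfolding Pr2_def by auto
lemma Pr1_sdiff: "Pr1 A \<Longrightarrow> Pr1 B \<Longrightarrow> Pr1 ((A - B) \<union> (B - A))" unfolding Pr1_def by auto
lemma Pr2_sdiff: "Pr2 A \<Longrightarrow> Pr2 B \<Longrightarrow> Pr2 ((A - B) \<union> (B - A))" unfolding Pr2_def by auto

lemma G1_mI: "a \<in> Gamma1 \<Longrightarrow> mI ** a \<in> Gamma1"
  by (auto simp: Gamma1_eq mI_dgs Pr1_compl)
lemma G2_mI: "a \<in> Gamma2 \<Longrightarrow> mI ** a \<in> Gamma2"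
  by (auto simp: Gamma2_eq mI_dgs Pr2_compl)
lemma G1_mult: "a \<in> Gamma1 \<Longrightarrow> b \<in> Gamma1 \<Longrightarrow> a ** b \<in> Gamma1"
  by (auto simp: Gamma1_eq dgs_mult Pr1_sdiff)
lemma G2_mult: "a \<in> Gamma2 \<Longrightarrow> b \<in> Gamma2 \<Longrightarrow> a ** b \<in> Gamma2"
  by (auto simp: Gamma2_eq dgs_mult Pr2_sdiff)

lemma mI_comm: "mI ** y = y ** mI" by (simp add: mI_left mI_right)

lemma mI_mI: "mI ** (mI ** y) = y" by (simp add: mI_left)

lemma mI_assoc: "(mI ** a) ** k = a ** (mI ** k)"
  by (metis mI_comm matrix_mul_assoc)

definition cm :: "mat6 set \<Rightarrow> mat6 \<Rightarrow> mat6 set" where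
  "cm \<Gamma> a = (\<lambda>k. a ** k) ` act_kernel \<Gamma>"

lemma iso_cm: "isotropy_order \<Gamma> g = card (cm \<Gamma> ` stab \<Gamma> g)"
  unfolding isotropy_order_def cm_def by simp

lemma kernel_mI:
  assumes G: "\<And>a. a \<in> \<Gamma> \<Longrightarrow> mI ** a \<in> \<Gamma>" and k: "k \<in> act_kernel \<Gamma>"
  shows "mI ** k \<in> act_kernel \<Gamma>"
  unfolding act_kernel_def
proof (intro CollectI conjI ballI)
  show "mI ** k \<in> \<Gamma>" using k G unfolding act_kernel_def by auto
  fix g assume g: "g \<in> SO6"
  then obtain b where b: "b \<in> Gamma1" "k ** g = g ** b" using k unfolding act_kernel_def by auto
  have "(mI ** k) ** g = g ** (mI ** b)"
    by (metis b(2) mI_comm matrix_mul_assoc)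
  then show "\<exists>b\<in>Gamma1. (mI ** k) ** g = g ** b" using G1_mI[OF b(1)] by blast
qed

lemma cm_mI:
  assumes G: "\<And>a. a \<in> \<Gamma> \<Longrightarrow> mI ** a \<in> \<Gamma>"
  shows "cm \<Gamma> (mI ** a) = cm \<Gamma> a"
proof
  show "cm \<Gamma> (mI ** a) \<subseteq> cm \<Gamma> a"
    unfolding cm_def using kernel_mI[OF G] by (auto simp: mI_assoc)
  show "cm \<Gamma> a \<subseteq> cm \<Gamma> (mI ** a)"
  proof
    fix x assume "x \<in> cm \<Gamma> a"
    then obtain k where k: "k \<in> act_kernel \<Gamma>" "x = a ** k" unfolding cm_def by auto
    have "x = (mI ** a) ** (mI ** k)" by (simp add: k(2) mI_assoc mI_mI)
    then show "x \<in> cm \<Gamma> (mI ** a)" unfolding cm_def using kernel_mI[OF G k(1)] by auto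
  qed
qed

lemma one_G1: "mat 1 \<in> Gamma1"
proof -
  have "dgs {} \<in> Gamma1" unfolding Gamma1_eq by (auto simp: Pr1_def)
  then show ?thesis by (simp add: dgs_empty)
qed

lemma one_G2: "mat 1 \<in> Gamma2"
proof -
  have "dgs {} \<in> Gamma2" unfolding Gamma2_eq by (auto simp: Pr2_def)
  then show ?thesis by (simp add: dgs_empty)
qed

lemma one_kernel1: "mat 1 \<in> act_kernel Gamma1"
  unfolding act_kernel_def using one_G1 by (auto intro!: bexI[of _ "mat 1"])

lemma one_kernel2: "mat 1 \<in> act_kernel Gamma2"
  unfolding act_kernel_def using one_G1 one_G2 by (auto intro!: bexI[of _ "mat 1"])

lemma kernel_Pr1:
  assumes "dgs A \<in> act_kernel \<Gamma>"
  shows "Pr1 (sg1 -` A)"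
proof -
  obtain b where b: "b \<in> Gamma1" "dgs A ** pm sg1 = pm sg1 ** b"
    using assms pm1(1) unfolding act_kernel_def by auto
  have "b = pm sg1 ** (pm sg1 ** b)" by (simp add: matrix_mul_assoc pm1(2))
  also have "\<dots> = pm sg1 ** dgs A ** pm sg1" by (metis b(2) matrix_mul_assoc)
  also have "\<dots> = dgs (sg1 -` A)" by (simp add: pm_dgs pm1(2) flip: matrix_mul_assoc)
  finally have "dgs (sg1 -` A) \<in> Gamma1" using b(1) by simp
  then show ?thesis by (auto simp: Gamma1_eq dgs_eq_iff)
qed

lemma cm_eq_kernel:
  assumes "cm \<Gamma> a = cm \<Gamma> a'" "mat 1 \<in> act_kernel \<Gamma>"
  shows "\<exists>k\<in>act_kernel \<Gamma>. a = a' ** k"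
proof -
  have "a \<in> cm \<Gamma> a" unfolding cm_def using assms(2) by (auto intro!: image_eqI[of _ _ "mat 1"])
  then show ?thesis using assms(1) unfolding cm_def by auto
qed

lemma dgs_inv: "dgs B ** dgs B = mat 1"
  by (simp add: dgs_mult dgs_empty)

lemma cm_dgs_eq:
  assumes "cm \<Gamma> (dgs B) = cm \<Gamma> (dgs B')" "mat 1 \<in> act_kernel \<Gamma>"
  shows "Pr1 (sg1 -` ((B' - B) \<union> (B - B')))"
proof -
  obtain k where k: "k \<in> act_kernel \<Gamma>" "dgs B = dgs B' ** k" using cm_eq_kernel[OF assms] by auto
  have "k = dgs B' ** dgs B" by (simp add: k(2) matrix_mul_assoc dgs_inv)
  then have "dgs ((B' - B) \<union> (B - B')) \<in> act_kernel \<Gamma>" using k(1) by (simp add: dgs_mult)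
  then show ?thesis by (rule kernel_Pr1)
qed


lemma bits6: "P A" if "\<And>b1 b2 b3 b4 b5 b6. (1 \<in> A \<longleftrightarrow> b1) \<Longrightarrow> (2 \<in> A \<longleftrightarrow> b2) \<Longrightarrow> (3 \<in> A \<longleftrightarrow> b3) \<Longrightarrow>
   (4 \<in> A \<longleftrightarrow> b4) \<Longrightarrow> (5 \<in> A \<longleftrightarrow> b5) \<Longrightarrow> (6 \<in> A \<longleftrightarrow> b6) \<Longrightarrow> P A"
  using that by blast

lemma set6_eq: "(A::6 set) = B \<longleftrightarrow> (1 \<in> A \<longleftrightarrow> 1 \<in> B) \<and> (2 \<in> A \<longleftrightarrow> 2 \<in> B) \<and> (3 \<in> A \<longleftrightarrow> 3 \<in> B) \<and>
   (4 \<in> A \<longleftrightarrow> 4 \<in> B) \<and> (5 \<in> A \<longleftrightarrow> 5 \<in> B) \<and> (6 \<in> A \<longleftrightarrow> 6 \<in> B)"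
  by (auto simp: set_eq_iff forall_6[of "\<lambda>x. x \<in> A \<longleftrightarrow> x \<in> B"])

lemma rep1: "Pr1 A \<Longrightarrow> \<exists>B\<in>{{},{1,2},{1,3},{2,3}}. A = B \<or> A = - B"
  unfolding set6_eq[of A] Pr1_def
  by (cases "1 \<in> A"; cases "2 \<in> A"; cases "3 \<in> A"; cases "4 \<in> A"; cases "5 \<in> A"; cases "6 \<in> A") auto

lemma rep2: "Pr2 A \<Longrightarrow> \<exists>B\<in>{{},{1,2},{3,4},{5,6}}. A = B \<or> A = - B"
  unfolding set6_eq[of A] Pr2_def
  by (cases "1 \<in> A"; cases "2 \<in> A"; cases "3 \<in> A"; cases "4 \<in> A"; cases "5 \<in> A"; cases "6 \<in> A") auto

lemma trace_dgs: "trace (dgs B) = (\<Sum>i\<in>UNIV. if i \<in> B then -1 else 1)"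
  unfolding trace_def dgs_def by simp

lemma tr2: "Pr1 A \<Longrightarrow> trace (dgs A) = 2 \<Longrightarrow> A = {1,2} \<or> A = {1,3} \<or> A = {2,3}"
  unfolding set6_eq[of A] Pr1_def trace_dgs sum_6
  by (cases "1 \<in> A"; cases "2 \<in> A"; cases "3 \<in> A"; cases "4 \<in> A"; cases "5 \<in> A"; cases "6 \<in> A") simp_all

lemma tr_contra:
  assumes "Pr1 A" "Pr1 B" "trace (dgs A) = 2" "trace (dgs B) = 2" "trace (dgs A ** dgs B) = -2"
  shows False
proof -
  have "A = {1,2} \<or> A = {1,3} \<or> A = {2,3}" "B = {1,2} \<or> B = {1,3} \<or> B = {2,3}"
    using tr2 assms by auto
  then show False using assms(5) by (auto simp: dgs_mult trace_dgs sum_6)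
qed


lemma finite_G1: "finite Gamma1" unfolding Gamma1_eq by simp
lemma finite_G2: "finite Gamma2" unfolding Gamma2_eq by simp

lemma stab_sub: "stab \<Gamma> g \<subseteq> \<Gamma>" unfolding stab_def by auto

lemma iso1_le: "isotropy_order Gamma1 g \<le> 4"
proof -
  let ?R = "{{},{1,2},{1,3},{2,3}} :: 6 set set"
  have "cm Gamma1 ` stab Gamma1 g \<subseteq> (\<lambda>B. cm Gamma1 (dgs B)) ` ?R"
  proof
    fix x assume "x \<in> cm Gamma1 ` stab Gamma1 g"
    then obtain a where a: "a \<in> Gamma1" "x = cm Gamma1 a" using stab_sub by blast
    then obtain A where A: "Pr1 A" "a = dgs A" by (auto simp: Gamma1_eq)
    obtain B where B: "B \<in> ?R" "A = B \<or> A = - B" using rep1[OF A(1)] by blast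
    have "cm Gamma1 a = cm Gamma1 (dgs B)"
    proof (cases "A = B")
      case False
      then have "a = mI ** dgs B" using B A by (simp add: mI_dgs)
      then show ?thesis using cm_mI[of Gamma1, OF G1_mI] by simp
    qed (simp add: A)
    then show "x \<in> (\<lambda>B. cm Gamma1 (dgs B)) ` ?R" using a B by blast
  qed
  then have "card (cm Gamma1 ` stab Gamma1 g) \<le> card ((\<lambda>B. cm Gamma1 (dgs B)) ` ?R)"
    by (intro card_mono) auto
  also have "\<dots> \<le> card ?R" by (rule card_image_le) simp
  also have "\<dots> \<le> 4" by (simp add: card_insert_if doubleton_eq_iff)
  finally show ?thesis by (simp add: iso_cm)
qed

lemma iso1_ge: "isotropy_order Gamma1 (mat 1) \<ge> 4"
proof -
  let ?R = "{{},{1,2},{1,3},{2,3}} :: 6 set set"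
  have st: "stab Gamma1 (mat 1) = Gamma1" unfolding stab_def by auto
  have sub: "dgs ` ?R \<subseteq> Gamma1" unfolding Gamma1_eq by (auto simp: Pr1_def)
  have inj: "inj_on (\<lambda>B. cm Gamma1 (dgs B)) ?R"
  proof (rule inj_onI)
    fix B B' assume B: "B \<in> ?R" "B' \<in> ?R" and eq: "cm Gamma1 (dgs B) = cm Gamma1 (dgs B')"
    have "Pr1 (sg1 -` ((B' - B) \<union> (B - B')))" by (rule cm_dgs_eq[OF eq one_kernel1])
    then show "B = B'" using B by (simp add: Pr1_def sg1_simps; elim disjE; simp)
  qed
  have "card ?R = 4" by (simp add: card_insert_if doubleton_eq_iff)
  then have "4 = card ((\<lambda>B. cm Gamma1 (dgs B)) ` ?R)" using card_image[OF inj] by simp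
  also have "\<dots> \<le> card (cm Gamma1 ` stab Gamma1 (mat 1))"
    using sub finite_G1 unfolding st by (intro card_mono) auto
  finally show ?thesis by (simp add: iso_cm)
qed

lemma max_iso1: "max_isotropy Gamma1 = 4"
  unfolding max_isotropy_def
proof (rule Max_eqI)
  show "finite (isotropy_order Gamma1 ` SO6)"
    by (rule finite_subset[of _ "{..4}"]) (auto simp: iso1_le)
  show "\<And>y. y \<in> isotropy_order Gamma1 ` SO6 \<Longrightarrow> y \<le> 4" using iso1_le by auto
  show "4 \<in> isotropy_order Gamma1 ` SO6"
    using iso1_le[of "mat 1"] iso1_ge mat1_SO6 by (intro image_eqI[of _ _ "mat 1"]) auto
qed


lemma stab_conj:
  assumes g: "g \<in> SO6" and a: "a \<in> stab \<Gamma> g"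
  shows "transpose g ** a ** g \<in> Gamma1"
proof -
  obtain b where b: "b \<in> Gamma1" "a ** g = g ** b" using a unfolding stab_def by auto
  have "transpose g ** a ** g = transpose g ** (a ** g)" by (simp only: matrix_mul_assoc)
  also have "\<dots> = transpose g ** (g ** b)" by (simp only: b(2))
  also have "\<dots> = (transpose g ** g) ** b" by (simp only: matrix_mul_assoc)
  also have "\<dots> = b" using g by (simp add: SO6_def)
  finally show ?thesis using b(1) by simp
qed

lemma trace_conj:
  assumes g: "g \<in> SO6"
  shows "trace (transpose g ** a ** g) = trace a"
proof -
  have "trace (transpose g ** a ** g) = trace (g ** (transpose g ** a))" by (rule trace_mul_sym)
  also have "\<dots> = trace a" using SO6_right_inv[OF g] by (simp add: matrix_mul_assoc)
  finally show ?thesis .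
qed

lemma conj_mult:
  assumes g: "g \<in> SO6"
  shows "(transpose g ** a ** g) ** (transpose g ** a' ** g) = transpose g ** (a ** a') ** g"
proof -
  have "(transpose g ** a ** g) ** (transpose g ** a' ** g) = transpose g ** a ** (g ** transpose g) ** a' ** g"
    by (simp add: matrix_mul_assoc)
  also have "\<dots> = transpose g ** (a ** a') ** g" using SO6_right_inv[OF g] by (simp add: matrix_mul_assoc)
  finally show ?thesis .
qed

lemma stab_mI:
  assumes "a \<in> stab Gamma2 g" shows "mI ** a \<in> stab Gamma2 g"
proof -
  obtain b where b: "a \<in> Gamma2" "b \<in> Gamma1" "a ** g = g ** b" using assms unfolding stab_def by auto
  have "(mI ** a) ** g = g ** (mI ** b)" by (metis b(3) mI_comm matrix_mul_assoc)
  then show ?thesis unfolding stab_def using G2_mI[OF b(1)] G1_mI[OF b(2)] by blast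
qed

lemma two_not_in_stab:
  assumes g: "g \<in> SO6" and B: "B \<in> {{1,2},{3,4},{5,6}}" "B' \<in> {{1,2},{3,4},{5,6}}" "B \<noteq> B'"
    and s: "dgs B \<in> stab Gamma2 g" "dgs B' \<in> stab Gamma2 g"
  shows False
proof -
  obtain C where C: "Pr1 C" "transpose g ** dgs B ** g = dgs C"
    using stab_conj[OF g s(1)] by (auto simp: Gamma1_eq)
  obtain C' where C': "Pr1 C'" "transpose g ** dgs B' ** g = dgs C'"
    using stab_conj[OF g s(2)] by (auto simp: Gamma1_eq)
  have trB: "trace (dgs B) = 2" "trace (dgs B') = 2" using B(1,2)
    by (simp_all add: trace_dgs sum_6; elim disjE; simp)+
  have t1: "trace (dgs C) = 2" using trace_conj[OF g, of "dgs B"] C(2) trB by simp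
  have t2: "trace (dgs C') = 2" using trace_conj[OF g, of "dgs B'"] C'(2) trB by simp
  have "dgs C ** dgs C' = transpose g ** (dgs B ** dgs B') ** g"
    using conj_mult[OF g] C(2) C'(2) by metis
  then have "trace (dgs C ** dgs C') = trace (dgs B ** dgs B')" using trace_conj[OF g] by simp
  also have "\<dots> = -2" using B
    by (simp add: dgs_mult; elim disjE; simp add: trace_dgs sum_6; elim disjE; simp)
  finally show False using tr_contra[OF C(1) C'(1) t1 t2] by simp
qed

lemma iso2_le:
  assumes g: "g \<in> SO6"
  shows "isotropy_order Gamma2 g \<le> 2"
proof -
  let ?S = "stab Gamma2 g"
  let ?P = "{{1,2},{3,4},{5,6}} :: 6 set set"
  define B0 where "B0 = (if \<exists>B\<in>?P. dgs B \<in> ?S then (SOME B. B \<in> ?P \<and> dgs B \<in> ?S) else {1,2})"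
  have uniq: "B = B0" if "B \<in> ?P" "dgs B \<in> ?S" for B
  proof -
    have ex: "\<exists>B\<in>?P. dgs B \<in> ?S" using that by blast
    then have "B0 \<in> ?P \<and> dgs B0 \<in> ?S" unfolding B0_def using someI_ex[of "\<lambda>B. B \<in> ?P \<and> dgs B \<in> ?S"] by auto
    then show "B = B0" using two_not_in_stab[OF g, of B B0] that by blast
  qed
  have "cm Gamma2 ` ?S \<subseteq> {cm Gamma2 (mat 1), cm Gamma2 (dgs B0)}"
  proof
    fix x assume "x \<in> cm Gamma2 ` ?S"
    then obtain a where a: "a \<in> ?S" "x = cm Gamma2 a" by blast
    then obtain A where A: "Pr2 A" "a = dgs A" using stab_sub[of Gamma2 g] by (auto simp: Gamma2_eq)
    obtain B where B: "B \<in> {{},{1,2},{3,4},{5,6}}" "A = B \<or> A = - B" using rep2[OF A(1)] by blast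
    have cmB: "cm Gamma2 a = cm Gamma2 (dgs B)"
    proof (cases "A = B")
      case False
      then have "a = mI ** dgs B" using B A by (simp add: mI_dgs)
      then show ?thesis using cm_mI[of Gamma2, OF G2_mI] by simp
    qed (simp add: A)
    have inS: "dgs B \<in> ?S"
    proof (cases "A = B")
      case False
      then have "dgs B = mI ** a" using B A by (simp add: mI_dgs)
      then show ?thesis using stab_mI[OF a(1)] by simp
    qed (use A a in simp)
    show "x \<in> {cm Gamma2 (mat 1), cm Gamma2 (dgs B0)}"
    proof (cases "B = {}")
      case True then show ?thesis using a cmB by (simp add: dgs_empty)
    next
      case False
      then have "B \<in> ?P" using B(1) by auto
      then have "B = B0" using uniq inS by blast
      then show ?thesis using a cmB by simp
    qed
  qed
  then have "card (cm Gamma2 ` ?S) \<le> card {cm Gamma2 (mat 1), cm Gamma2 (dgs B0)}"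
    by (intro card_mono) auto
  also have "\<dots> \<le> 2" by (simp add: card_insert_if)
  finally show ?thesis by (simp add: iso_cm)
qed

lemma iso2_ge: "isotropy_order Gamma2 (mat 1) \<ge> 2"
proof -
  have e12: "dgs {1,2} \<in> Gamma1" "dgs {1,2} \<in> Gamma2"
    by (auto simp: Gamma1_eq Gamma2_eq Pr1_def Pr2_def)
  have s: "mat 1 \<in> stab Gamma2 (mat 1)" "dgs {1,2} \<in> stab Gamma2 (mat 1)"
    unfolding stab_def using one_G1 one_G2 e12 by (auto intro!: bexI[of _ "mat 1"] bexI[of _ "dgs {1,2}"])
  have ne: "cm Gamma2 (dgs {1,2}) \<noteq> cm Gamma2 (dgs {})"
  proof
    assume eq: "cm Gamma2 (dgs {1,2}) = cm Gamma2 (dgs {})"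
    have "Pr1 (sg1 -` (({} - {1,2}) \<union> ({1,2} - {})))" by (rule cm_dgs_eq[OF eq one_kernel2])
    then show False by (auto simp: Pr1_def sg1_simps)
  qed
  have fin: "finite (cm Gamma2 ` stab Gamma2 (mat 1))"
    using finite_G2 stab_sub[of Gamma2] by (meson finite_imageI finite_subset)
  have "2 = card {cm Gamma2 (dgs {1,2}), cm Gamma2 (mat 1)}" using ne by (simp add: dgs_empty)
  also have "\<dots> \<le> card (cm Gamma2 ` stab Gamma2 (mat 1))"
    using s fin by (intro card_mono) auto
  finally show ?thesis by (simp add: iso_cm)
qed

lemma max_iso2: "max_isotropy Gamma2 = 2"
  unfolding max_isotropy_def
proof (rule Max_eqI)
  show "finite (isotropy_order Gamma2 ` SO6)"
    by (rule finite_subset[of _ "{..2}"]) (auto simp: iso2_le)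
  show "\<And>y. y \<in> isotropy_order Gamma2 ` SO6 \<Longrightarrow> y \<le> 2" using iso2_le by auto
  show "2 \<in> isotropy_order Gamma2 ` SO6"
    using iso2_le[OF mat1_SO6] iso2_ge mat1_SO6 by (intro image_eqI[of _ _ "mat 1"]) auto
qed


lemma Cinf_openD: "Cinf_on U F \<Longrightarrow> open U" unfolding Cinf_on_def by simp

lemma Cinf_diffD: "Cinf_on U F \<Longrightarrow> v \<in> Basis \<Longrightarrow> y \<in> U \<Longrightarrow> (\<lambda>t. F (y + t *\<^sub>R v)) differentiable (at 0)"
  unfolding Cinf_on_def by (metis iter_pderiv.simps(1) lists.Nil)

lemma Cinf_contD: "Cinf_on U F \<Longrightarrow> v \<in> Basis \<Longrightarrow> continuous_on U (pderiv v F)"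
  unfolding Cinf_on_def
  by (metis iter_pderiv.simps(1,2) lists.Cons lists.Nil)

lemma Cinf_pderiv: "Cinf_on U F \<Longrightarrow> v \<in> Basis \<Longrightarrow> Cinf_on U (pderiv v F)"
proof -
  have it: "iter_pderiv vs (pderiv v F) = iter_pderiv (vs @ [v]) F" for vs
    by (induction vs) auto
  assume "Cinf_on U F" "v \<in> Basis"
  then show ?thesis unfolding Cinf_on_def it by auto
qed

lemma pderiv_at:
  assumes "Cinf_on U F" "v \<in> Basis" "y + t0 *\<^sub>R v \<in> U"
  shows "((\<lambda>t. F (y + t *\<^sub>R v)) has_real_derivative pderiv v F (y + t0 *\<^sub>R v)) (at t0)"
proof -
  let ?g = "\<lambda>s. F ((y + t0 *\<^sub>R v) + s *\<^sub>R v)"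
  have "(?g has_real_derivative pderiv v F (y + t0 *\<^sub>R v)) (at 0)"
    using Cinf_diffD[OF assms] unfolding pderiv_def by (simp add: DERIV_deriv_iff_real_differentiable)
  then have "(?g has_real_derivative pderiv v F (y + t0 *\<^sub>R v)) (at (t0 + - t0))" by simp
  then have "((\<lambda>t. ?g (t + - t0)) has_real_derivative pderiv v F (y + t0 *\<^sub>R v)) (at t0)"
    by (rule DERIV_shift[THEN iffD1])
  moreover have "(\<lambda>t. ?g (t + - t0)) = (\<lambda>t. F (y + t *\<^sub>R v))"
    by (auto simp: algebra_simps)
  ultimately show ?thesis by simp
qed

lemma mvt_line:
  assumes F: "Cinf_on U F" and b: "b \<in> Basis" and seg: "\<And>t. \<bar>t\<bar> \<le> \<bar>s\<bar> \<Longrightarrow> y + t *\<^sub>R b \<in> U"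
  shows "\<exists>\<theta>. \<bar>\<theta>\<bar> \<le> \<bar>s\<bar> \<and> F (y + s *\<^sub>R b) - F y = s * pderiv b F (y + \<theta> *\<^sub>R b)"
proof -
  let ?G = "\<lambda>t. F (y + t *\<^sub>R b)"
  have D: "\<And>t. \<bar>t\<bar> \<le> \<bar>s\<bar> \<Longrightarrow> (?G has_real_derivative pderiv b F (y + t *\<^sub>R b)) (at t)"
    using pderiv_at[OF F b seg] by blast
  consider "s = 0" | "s > 0" | "s < 0" by linarith
  then show ?thesis
  proof cases
    case 1 then show ?thesis by (intro exI[of _ 0]) simp
  next
    case 2
    then obtain z where z: "0 < z" "z < s" "?G s - ?G 0 = (s - 0) * pderiv b F (y + z *\<^sub>R b)"
      using MVT2[of 0 s ?G "\<lambda>t. pderiv b F (y + t *\<^sub>R b)"] D by force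
    then show ?thesis by (intro exI[of _ z]) auto
  next
    case 3
    then obtain z where z: "s < z" "z < 0" "?G 0 - ?G s = (0 - s) * pderiv b F (y + z *\<^sub>R b)"
      using MVT2[of s 0 ?G "\<lambda>t. pderiv b F (y + t *\<^sub>R b)"] D by force
    then show ?thesis by (intro exI[of _ z]) (auto simp: algebra_simps)
  qed
qed

definition pj :: "'a::euclidean_space set \<Rightarrow> 'a \<Rightarrow> 'a" where
  "pj S h = (\<Sum>b\<in>S. (h \<bullet> b) *\<^sub>R b)"

lemma norm_pj: "S \<subseteq> Basis \<Longrightarrow> norm (pj S h) \<le> real (card S) * norm h"
proof -
  assume S: "S \<subseteq> Basis"
  have "norm (pj S h) \<le> (\<Sum>b\<in>S. norm ((h \<bullet> b) *\<^sub>R b))" unfolding pj_def by (rule norm_sum)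
  also have "\<dots> \<le> (\<Sum>b\<in>S. norm h)"
    using S by (intro sum_mono) (auto simp: Basis_le_norm)
  finally show ?thesis by simp
qed

lemma C1_partial:
  fixes F :: "'a::euclidean_space \<Rightarrow> real"
  assumes F: "Cinf_on U F" and x: "x \<in> U" and r: "r > 0" "ball x r \<subseteq> U"
    and S: "S \<subseteq> Basis"
  shows "\<forall>e>0. \<exists>d>0. \<forall>h. norm h < d \<longrightarrow>
     \<bar>F (x + pj S h) - F x - (\<Sum>b\<in>S. (h \<bullet> b) * pderiv b F x)\<bar> \<le> e * norm h"
proof -
  have fin: "finite S" using S finite_Basis finite_subset by blast
  define M where "M = real DIM('a) + 1"
  have M: "M \<ge> 1" unfolding M_def by simp
  from fin S show ?thesis
  proof (induction S rule: finite_induct)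
    case empty then show ?case by (auto simp: pj_def intro: exI[of _ 1])
  next
    case (insert b S)
    have b: "b \<in> Basis" and SB: "S \<subseteq> Basis" using insert.prems by auto
    show ?case
    proof (intro allI impI)
      fix e :: real assume e: "e > 0"
      obtain d1 where d1: "d1 > 0" "\<And>h. norm h < d1 \<Longrightarrow>
         \<bar>F (x + pj S h) - F x - (\<Sum>b\<in>S. (h \<bullet> b) * pderiv b F x)\<bar> \<le> e/2 * norm h"
        using insert.IH[OF SB] e by (meson half_gt_zero)
      have "isCont (pderiv b F) x"
        using Cinf_contD[OF F b] Cinf_openD[OF F] x continuous_on_eq_continuous_at by blast
      then obtain d2 where d2: "d2 > 0" "\<And>z. dist z x < d2 \<Longrightarrow> dist (pderiv b F z) (pderiv b F x) < e/2"
        using e unfolding continuous_at_eps_delta by (meson half_gt_zero)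
      define d where "d = min d1 (min (d2 / M) (r / M))"
      have d: "d > 0" unfolding d_def using d1 d2 r M by auto
      show "\<exists>d>0. \<forall>h. norm h < d \<longrightarrow>
         \<bar>F (x + pj (insert b S) h) - F x - (\<Sum>b\<in>insert b S. (h \<bullet> b) * pderiv b F x)\<bar> \<le> e * norm h"
      proof (intro exI[of _ d] conjI allI impI d)
        fix h :: 'a assume h: "norm h < d"
        define y where "y = x + pj S h"
        define s where "s = h \<bullet> b"
        have cardS: "real (card S) + 1 \<le> M"
          using card_mono[OF finite_Basis SB] unfolding M_def by simp
        have npj: "norm (pj S h) \<le> real (card S) * norm h" by (rule norm_pj[OF SB])
        have ns: "\<bar>s\<bar> \<le> norm h" unfolding s_def using b by (rule Basis_le_norm)
        have close: "norm (y + t *\<^sub>R b - x) \<le> M * norm h" if "\<bar>t\<bar> \<le> \<bar>s\<bar>" for t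
        proof -
          have "norm (y + t *\<^sub>R b - x) \<le> norm (pj S h) + norm (t *\<^sub>R b)"
            unfolding y_def using norm_triangle_ineq[of "pj S h" "t *\<^sub>R b"] by simp
          also have "\<dots> \<le> real (card S) * norm h + norm h"
            using npj that ns b by simp
          also have "\<dots> \<le> M * norm h" using cardS
            by (metis distrib_right mult_1 mult_right_mono norm_ge_zero)
          finally show ?thesis .
        qed
        have Mh: "M * norm h < min d2 r"
        proof -
          have "norm h < d2 / M" "norm h < r / M" using h unfolding d_def by auto
          then show ?thesis using M by (simp add: field_simps)
        qed
        have seg: "y + t *\<^sub>R b \<in> U" if "\<bar>t\<bar> \<le> \<bar>s\<bar>" for t
        proof -
          have "dist x (y + t *\<^sub>R b) < r" using close[OF that] Mh by (simp add: dist_norm norm_minus_commute)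
          then show ?thesis using r(2) by auto
        qed
        obtain \<theta> where th: "\<bar>\<theta>\<bar> \<le> \<bar>s\<bar>" "F (y + s *\<^sub>R b) - F y = s * pderiv b F (y + \<theta> *\<^sub>R b)"
          using mvt_line[OF F b seg] by blast
        have "dist (y + \<theta> *\<^sub>R b) x < d2" using close[OF th(1)] Mh by (simp add: dist_norm)
        then have "dist (pderiv b F (y + \<theta> *\<^sub>R b)) (pderiv b F x) < e/2" by (rule d2(2))
        then have pd: "\<bar>pderiv b F (y + \<theta> *\<^sub>R b) - pderiv b F x\<bar> \<le> e/2" by (simp add: dist_real_def)
        have h1: "norm h < d1" using h unfolding d_def by auto
        have pjins: "pj (insert b S) h = pj S h + s *\<^sub>R b" unfolding pj_def s_def using insert.hyps by simp
        have sumins: "(\<Sum>b\<in>insert b S. (h \<bullet> b) * pderiv b F x) = (\<Sum>b\<in>S. (h \<bullet> b) * pderiv b F x) + s * pderiv b F x"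
          unfolding s_def using insert.hyps by simp
        have "\<bar>F (x + pj (insert b S) h) - F x - (\<Sum>b\<in>insert b S. (h \<bullet> b) * pderiv b F x)\<bar>
          = \<bar>(F y - F x - (\<Sum>b\<in>S. (h \<bullet> b) * pderiv b F x)) + s * (pderiv b F (y + \<theta> *\<^sub>R b) - pderiv b F x)\<bar>"
          using th(2) unfolding pjins sumins y_def by (simp add: algebra_simps)
        also have "\<dots> \<le> e/2 * norm h + \<bar>s\<bar> * (e/2)"
        proof -
          have "\<bar>s * (pderiv b F (y + \<theta> *\<^sub>R b) - pderiv b F x)\<bar> \<le> \<bar>s\<bar> * (e/2)"
            unfolding abs_mult by (rule mult_left_mono[OF pd]) simp
          then show ?thesis using d1(2)[OF h1] unfolding y_def by (simp add: abs_triangle_ineq order_trans[OF abs_triangle_ineq])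
        qed
        also have "\<dots> \<le> e/2 * norm h + norm h * (e/2)"
        proof -
          have "\<bar>s\<bar> * (e/2) \<le> norm h * (e/2)" by (rule mult_right_mono[OF ns]) (use e in simp)
          then show ?thesis by linarith
        qed
        finally show "\<bar>F (x + pj (insert b S) h) - F x - (\<Sum>b\<in>insert b S. (h \<bullet> b) * pderiv b F x)\<bar> \<le> e * norm h"
          by simp
      qed
    qed
  qed
qed

lemma Cinf_has_derivative:
  fixes F :: "'a::euclidean_space \<Rightarrow> real"
  assumes F: "Cinf_on U F" and x: "x \<in> U"
  shows "(F has_derivative (\<lambda>h. \<Sum>b\<in>Basis. (h \<bullet> b) * pderiv b F x)) (at x)"
proof -
  obtain r where r: "r > 0" "ball x r \<subseteq> U" using Cinf_openD[OF F] x open_contains_ball by blast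
  have C: "\<forall>e>0. \<exists>d>0. \<forall>h. norm h < d \<longrightarrow>
     \<bar>F (x + pj Basis h) - F x - (\<Sum>b\<in>Basis. (h \<bullet> b) * pderiv b F x)\<bar> \<le> e * norm h"
    by (rule C1_partial[OF F x r]) simp
  have pjB: "pj Basis h = h" for h :: 'a unfolding pj_def by (rule euclidean_representation)
  show ?thesis unfolding has_derivative_at_alt
  proof (intro conjI allI impI)
    show "bounded_linear (\<lambda>h. \<Sum>b\<in>Basis. (h \<bullet> b) * pderiv b F x)"
      by (intro bounded_linear_sum bounded_linear_mult_const bounded_linear_inner_left)
    fix e :: real assume "e > 0"
    then obtain d where d: "d > 0" "\<And>h. norm h < d \<Longrightarrow>
     \<bar>F (x + h) - F x - (\<Sum>b\<in>Basis. (h \<bullet> b) * pderiv b F x)\<bar> \<le> e * norm h" using C pjB by metis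
    show "\<exists>d>0. \<forall>y. norm (y - x) < d \<longrightarrow>
      norm (F y - F x - (\<Sum>b\<in>Basis. ((y - x) \<bullet> b) * pderiv b F x)) \<le> e * norm (y - x)"
      using d by (intro exI[of _ d]) (metis add.commute diff_add_cancel real_norm_def)
  qed
qed


lemma munit_nth: "munit a b $ r $ s = (if r = a \<and> s = b then 1 else 0)"
  unfolding munit_def by simp

lemma munit_left: "(munit a b ** M) $ r $ s = (if r = a then M $ b $ s else 0)"
proof -
  have "(munit a b ** M) $ r $ s = (\<Sum>k\<in>UNIV. (if r = a \<and> k = b then 1 else 0) * M $ k $ s)"
    unfolding munit_def matrix_matrix_mult_def by simp
  also have "\<dots> = (\<Sum>k\<in>UNIV. (if k = b then (if r = a then M $ k $ s else 0) else 0))"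
    by (rule sum.cong) auto
  also have "\<dots> = (if r = a then M $ b $ s else 0)" by simp
  finally show ?thesis .
qed

lemma munit_mult: "munit a b ** munit c d = (if b = c then munit a d else 0)"
  by (simp add: vec_eq_iff munit_left munit_nth)

lemma mat_add_rdistrib: "((A::mat6) + B) ** C = A ** C + B ** C"
  by (simp add: matrix_matrix_mult_def vec_eq_iff sum.distrib distrib_right)
lemma mat_sub_rdistrib: "((A::mat6) - B) ** C = A ** C - B ** C"
  by (simp add: matrix_matrix_mult_def vec_eq_iff sum_subtractf left_diff_distrib)
lemma mat_sub_ldistrib: "(C::mat6) ** (A - B) = C ** A - C ** B"
  by (simp add: matrix_matrix_mult_def vec_eq_iff sum_subtractf right_diff_distrib)
lemma mat_scaleR_left: "(k *\<^sub>R (A::mat6)) ** B = k *\<^sub>R (A ** B)"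
  by (simp add: scalar_matrix_assoc)
lemma mat_scaleR_right: "(A::mat6) ** (k *\<^sub>R B) = k *\<^sub>R (A ** B)"
  by (simp add: matrix_scalar_ac scalar_matrix_assoc)

definition Pm :: "6 \<Rightarrow> 6 \<Rightarrow> mat6" where "Pm i j = munit i i + munit j j"
definition Ym :: "6 \<Rightarrow> 6 \<Rightarrow> mat6" where "Ym i j = munit i j - munit j i"

lemmas malg = mat_add_rdistrib matrix_add_ldistrib mat_sub_rdistrib mat_sub_ldistrib munit_mult
   mat_scaleR_left mat_scaleR_right

lemma PP: "i \<noteq> j \<Longrightarrow> Pm i j ** Pm i j = Pm i j" unfolding Pm_def by (simp add: malg)
lemma PY: "i \<noteq> j \<Longrightarrow> Pm i j ** Ym i j = Ym i j" unfolding Pm_def Ym_def by (simp add: malg)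
lemma YP: "i \<noteq> j \<Longrightarrow> Ym i j ** Pm i j = Ym i j" unfolding Pm_def Ym_def by (simp add: malg)
lemma YY: "i \<noteq> j \<Longrightarrow> Ym i j ** Ym i j = - Pm i j" unfolding Pm_def Ym_def by (simp add: malg)

lemma transpose_munit: "transpose (munit a b) = munit b a"
  unfolding transpose_def munit_def by (auto simp: vec_eq_iff)

lemma transpose_add6: "transpose ((A::mat6) + B) = transpose A + transpose B"
  unfolding transpose_def by (simp add: vec_eq_iff)
lemma transpose_sub6: "transpose ((A::mat6) - B) = transpose A - transpose B"
  unfolding transpose_def by (simp add: vec_eq_iff)

lemma tP: "transpose (Pm i j) = Pm i j" unfolding Pm_def by (simp add: transpose_add6 transpose_munit)
lemma tY: "transpose (Ym i j) = - Ym i j" unfolding Ym_def by (simp add: transpose_sub6 transpose_munit)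

definition Rot :: "6 \<Rightarrow> 6 \<Rightarrow> real \<Rightarrow> mat6" where
  "Rot i j t = mat 1 + (cos (t / sqrt 2) - 1) *\<^sub>R Pm i j + sin (t / sqrt 2) *\<^sub>R Ym i j"

lemma Rot_add:
  assumes ij: "i \<noteq> j"
  shows "Rot i j a ** Rot i j b = Rot i j (a + b)"
proof -
  let ?P = "Pm i j" and ?Y = "Ym i j"
  let ?ca = "cos (a / sqrt 2)" and ?sa = "sin (a / sqrt 2)" and ?cb = "cos (b / sqrt 2)" and ?sb = "sin (b / sqrt 2)"
  have "Rot i j a ** Rot i j b = mat 1 + ((?ca - 1) + (?cb - 1) + (?ca - 1) * (?cb - 1) - ?sa * ?sb) *\<^sub>R ?P
      + (?sa + ?sb + (?ca - 1) * ?sb + ?sa * (?cb - 1)) *\<^sub>R ?Y"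
    unfolding Rot_def
    by (simp add: malg PP[OF ij] PY[OF ij] YP[OF ij] YY[OF ij] algebra_simps scaleR_add_left scaleR_diff_left)
  also have "\<dots> = Rot i j (a + b)"
    unfolding Rot_def by (simp add: add_divide_distrib cos_add sin_add algebra_simps)
  finally show ?thesis .
qed

lemma Rot_0: "Rot i j 0 = mat 1" unfolding Rot_def by simp

lemma transpose_Rot: "transpose (Rot i j t) = Rot i j (- t)"
  unfolding Rot_def by (simp add: transpose_add6 transpose_scalar tP tY)

lemma Rot_SO6:
  assumes ij: "i \<noteq> j"
  shows "Rot i j t \<in> SO6"
proof -
  have orth: "transpose (Rot i j s) ** Rot i j s = mat 1" for s
    by (simp add: transpose_Rot Rot_add[OF ij] Rot_0)
  have "det (Rot i j s) ^ 2 = 1" for s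
    using arg_cong[OF orth[of s], of det] by (simp add: det_mul det_transpose power2_eq_square)
  then have d: "det (Rot i j (t/2)) ^ 2 = 1" "det (Rot i j t) ^ 2 = 1" by auto
  have "det (Rot i j t) = det (Rot i j (t/2)) ^ 2"
    using Rot_add[OF ij, of "t/2" "t/2"] det_mul[of "Rot i j (t/2)" "Rot i j (t/2)"] by (simp add: power2_eq_square)
  then have "det (Rot i j t) = 1" using d(1) by simp
  then show ?thesis using orth unfolding SO6_def by simp
qed


lemma mpow_0: "mpow X 0 = mat 1" unfolding mpow_def by simp
lemma mpow_Suc: "mpow X (Suc k) = X ** mpow X k" unfolding mpow_def by simp

lemma mpow_scale: "mpow (t *\<^sub>R X) k = (t ^ k) *\<^sub>R mpow X k"
  by (induction k) (simp_all add: mpow_0 mpow_Suc mat_scaleR_left mat_scaleR_right)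

lemma skew_Y: "skewbasis i j = (1 / sqrt 2) *\<^sub>R Ym i j"
  unfolding skewbasis_def Ym_def by simp

lemma mat_uminus_left: "(- (A::mat6)) ** B = - (A ** B)"
  using mat_scaleR_left[of "-1" A B] by simp
lemma mat_uminus_right: "(A::mat6) ** (- B) = - (A ** B)"
  using mat_scaleR_right[of A "-1" B] by simp

lemma sqrt2_sq: "sqrt 2 * sqrt 2 = (2::real)" by simp

lemma XX: "i \<noteq> j \<Longrightarrow> skewbasis i j ** skewbasis i j = (- 1/2) *\<^sub>R Pm i j"
  unfolding skew_Y by (simp add: mat_scaleR_left mat_scaleR_right YY)

lemma PX: "i \<noteq> j \<Longrightarrow> Pm i j ** skewbasis i j = skewbasis i j"
  unfolding skew_Y by (simp add: mat_scaleR_right PY)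

lemma mpow_odd: "i \<noteq> j \<Longrightarrow> mpow (skewbasis i j) (2*m+1) = (-1/2)^m *\<^sub>R skewbasis i j"
proof (induction m)
  case 0 then show ?case by (simp add: mpow_Suc mpow_0)
next
  case (Suc m)
  have "mpow (skewbasis i j) (2 * Suc m + 1) = (skewbasis i j ** skewbasis i j) ** mpow (skewbasis i j) (2*m+1)"
    by (simp add: mpow_Suc matrix_mul_assoc)
  also have "\<dots> = (-1/2)^(Suc m) *\<^sub>R skewbasis i j"
    using Suc by (simp add: XX mat_scaleR_left mat_scaleR_right PX mat_uminus_left mat_uminus_right)
  finally show ?case .
qed

lemma mpow_even: "i \<noteq> j \<Longrightarrow> mpow (skewbasis i j) (2*m+2) = (-1/2)^(m+1) *\<^sub>R Pm i j"
proof (induction m)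
  case 0 then show ?case by (simp add: mpow_Suc mpow_0 numeral_2_eq_2 XX)
next
  case (Suc m)
  have "mpow (skewbasis i j) (2 * Suc m + 2) = (skewbasis i j ** skewbasis i j) ** mpow (skewbasis i j) (2*m+2)"
    by (simp add: mpow_Suc matrix_mul_assoc)
  also have "\<dots> = (-1/2)^(Suc m + 1) *\<^sub>R Pm i j"
    using Suc by (simp add: XX mat_scaleR_left mat_scaleR_right PP mat_uminus_left mat_uminus_right)
  finally show ?case .
qed

lemma sqrt2_pow_even: "sqrt 2 ^ (2*m) = (2::real) ^ m"
  by (simp add: power_mult)

lemma two_half_pow: "(2::real)^m * (-1/2)^m = (-1)^m"
  by (simp add: power_mult_distrib[symmetric])

lemma term_eq:
  assumes ij: "i \<noteq> j"
  shows "(1 / fact k) *\<^sub>R mpow (t *\<^sub>R skewbasis i j) k =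
    (if k = 0 then mat 1 else 0) + (if k = 0 then 0 else cos_coeff k * (t / sqrt 2) ^ k) *\<^sub>R Pm i j
    + (sin_coeff k * (t / sqrt 2) ^ k) *\<^sub>R Ym i j"
proof -
  consider "k = 0" | m where "k = 2*m+1" | m where "k = 2*m+2"
  proof (cases "even k")
    case True
    then obtain m where m: "k = 2*m" by (rule evenE)
    show ?thesis
    proof (cases m)
      case 0 then show ?thesis using that m by simp
    next
      case (Suc m') then show ?thesis using that(3)[of m'] m by simp
    qed
  next
    case False
    then obtain m where m: "k = 2*m+1" by (rule oddE)
    then show ?thesis using that by blast
  qed
  then show ?thesis
  proof cases
    case 1 then show ?thesis by (simp add: mpow_0)
  next
    case 2
    have c: "cos_coeff k = 0" using 2 by (simp add: cos_coeff_def)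
    have s: "sin_coeff k = (-1)^m / fact k" using 2 by (simp add: sin_coeff_def)
    have pw: "(t / sqrt 2) ^ k = t ^ k / (2 ^ m * sqrt 2)"
      using 2 by (simp add: power_divide sqrt2_pow_even)
    have "mpow (t *\<^sub>R skewbasis i j) k = (t ^ k * (-1/2)^m) *\<^sub>R skewbasis i j"
      unfolding mpow_scale 2 mpow_odd[OF ij] by simp
    then have "(1 / fact k) *\<^sub>R mpow (t *\<^sub>R skewbasis i j) k = ((1 / fact k) * t ^ k * (-1/2)^m / sqrt 2) *\<^sub>R Ym i j"
      unfolding skew_Y by simp
    also have "\<dots> = (sin_coeff k * (t / sqrt 2) ^ k) *\<^sub>R Ym i j"
      unfolding s pw using two_half_pow[of m] by (simp add: power_divide field_simps)
    finally show ?thesis using 2 c by simp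
  next
    case 3
    have s: "sin_coeff k = 0" using 3 by (simp add: sin_coeff_def)
    have c: "cos_coeff k = (-1)^(m+1) / fact k" using 3 by (simp add: cos_coeff_def)
    have pw: "(t / sqrt 2) ^ k = t ^ k / (2 ^ (m+1))"
      using 3 sqrt2_pow_even[of "m+1"] by (simp add: power_divide algebra_simps)
    have "mpow (t *\<^sub>R skewbasis i j) k = (t ^ k * (-1/2)^(m+1)) *\<^sub>R Pm i j"
      unfolding mpow_scale 3 mpow_even[OF ij] by simp
    then have "(1 / fact k) *\<^sub>R mpow (t *\<^sub>R skewbasis i j) k = ((1 / fact k) * t ^ k * (-1/2)^(m+1)) *\<^sub>R Pm i j"
      by simp
    also have "\<dots> = (cos_coeff k * (t / sqrt 2) ^ k) *\<^sub>R Pm i j"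
      unfolding c pw using two_half_pow[of m] by (simp add: power_divide field_simps)
    finally show ?thesis using 3 s by simp
  qed
qed

lemma mexp_Rot:
  assumes ij: "i \<noteq> j"
  shows "mexp (t *\<^sub>R skewbasis i j) = Rot i j t"
proof -
  let ?x = "t / sqrt 2"
  have s1: "(\<lambda>k. if k = 0 then (mat 1 :: mat6) else 0) sums mat 1"
    using sums_single[of 0 "\<lambda>_. mat 1 :: mat6"] by simp
  have cc: "(\<lambda>k. cos_coeff k * ?x ^ k - (if k = 0 then 1 else 0)) sums (cos ?x - 1)"
    using sums_diff[OF cos_converges[of ?x] sums_single[of 0 "\<lambda>_. 1::real"]] by simp
  have cc': "(\<lambda>k. if k = 0 then 0 else cos_coeff k * ?x ^ k) = (\<lambda>k. cos_coeff k * ?x ^ k - (if k = 0 then 1 else 0))"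
    by (auto simp: cos_coeff_def)
  have s2: "(\<lambda>k. (if k = 0 then 0 else cos_coeff k * ?x ^ k) *\<^sub>R Pm i j) sums ((cos ?x - 1) *\<^sub>R Pm i j)"
  proof -
    have "(\<lambda>k. if k = 0 then 0 else cos_coeff k * ?x ^ k) sums (cos ?x - 1)" using cc by (simp add: cc')
    then show ?thesis by (rule sums_scaleR_left)
  qed
  have s3: "(\<lambda>k. (sin_coeff k * ?x ^ k) *\<^sub>R Ym i j) sums (sin ?x *\<^sub>R Ym i j)"
    using sums_scaleR_left[OF sin_converges[of ?x]] by simp
  have "(\<lambda>k. (1 / fact k) *\<^sub>R mpow (t *\<^sub>R skewbasis i j) k) sums Rot i j t"
    unfolding term_eq[OF ij] Rot_def by (intro sums_add s1 s2 s3)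
  then show ?thesis unfolding mexp_def by (simp add: sums_unique[symmetric])
qed


definition cv :: "mat6 \<Rightarrow> 6 \<Rightarrow> 6 \<Rightarrow> real \<Rightarrow> mat6" where
  "cv g i j t = g ** Rot i j t"
definition cvd :: "mat6 \<Rightarrow> 6 \<Rightarrow> 6 \<Rightarrow> real \<Rightarrow> mat6" where
  "cvd g i j t = (- sin (t / sqrt 2) / sqrt 2) *\<^sub>R (g ** Pm i j) + (cos (t / sqrt 2) / sqrt 2) *\<^sub>R (g ** Ym i j)"

lemma cv_expand: "cv g i j = (\<lambda>t. g + (cos (t / sqrt 2) - 1) *\<^sub>R (g ** Pm i j) + sin (t / sqrt 2) *\<^sub>R (g ** Ym i j))"
  unfolding cv_def Rot_def by (simp add: matrix_add_ldistrib mat_scaleR_right)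

lemma sq2: "x * sqrt 2 / 2 = x / sqrt (2::real)"
proof -
  have "x / sqrt 2 = x * sqrt 2 / (sqrt 2 * sqrt 2)" by (simp add: field_simps)
  then show ?thesis by simp
qed

lemma cv_deriv: "(cv g i j has_vector_derivative cvd g i j t) (at t)"
  unfolding cv_expand cvd_def
  apply (rule has_vector_derivative_eq_rhs)
   apply (auto intro!: derivative_eq_intros simp: sq2)
  done

lemma cv_SO6: "g \<in> SO6 \<Longrightarrow> i \<noteq> j \<Longrightarrow> cv g i j t \<in> SO6"
  unfolding cv_def by (intro SO6_mult Rot_SO6)

lemma cvd_inner_diff: "(\<lambda>t. cvd g i j t \<bullet> b) differentiable (at t0)"
proof -
  have "(\<lambda>x. cos (x / sqrt 2)) differentiable (at t0)" "(\<lambda>x. sin (x / sqrt 2)) differentiable (at t0)"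
    unfolding real_differentiable_def by (auto intro!: derivative_eq_intros)
  then show ?thesis unfolding cvd_def inner_add_left inner_scaleR_left
    by (auto intro!: derivative_intros)
qed

lemma chain_curve:
  assumes G: "Cinf_on U G" and sub: "SO6 \<subseteq> U" and g: "g \<in> SO6" and ij: "i \<noteq> j"
  shows "((\<lambda>t. G (cv g i j t)) has_real_derivative
           (\<Sum>b\<in>Basis. (cvd g i j t \<bullet> b) * pderiv b G (cv g i j t))) (at t)"
proof -
  have c: "cv g i j t \<in> U" using cv_SO6[OF g ij] sub by auto
  have D: "(G has_derivative (\<lambda>h. \<Sum>b\<in>Basis. (h \<bullet> b) * pderiv b G (cv g i j t))) (at (cv g i j t))"
    by (rule Cinf_has_derivative[OF G c])
  have C: "(cv g i j has_derivative (\<lambda>s. s *\<^sub>R cvd g i j t)) (at t)"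
    using cv_deriv unfolding has_vector_derivative_def .
  have "((\<lambda>t. G (cv g i j t)) has_derivative
      (\<lambda>s. \<Sum>b\<in>Basis. ((s *\<^sub>R cvd g i j t) \<bullet> b) * pderiv b G (cv g i j t))) (at t)"
    using has_derivative_compose[OF C D] .
  moreover have "(\<lambda>s. \<Sum>b\<in>Basis. ((s *\<^sub>R cvd g i j t) \<bullet> b) * pderiv b G (cv g i j t))
     = (*) (\<Sum>b\<in>Basis. (cvd g i j t \<bullet> b) * pderiv b G (cv g i j t))"
    by (auto simp: sum_distrib_left sum_distrib_right mult_ac)
  ultimately show ?thesis unfolding has_field_derivative_def by simp
qed

lemma smooth_curve:
  assumes f: "smooth_SO6 f" and g: "g \<in> SO6" and ij: "i \<noteq> j"
  shows "\<exists>\<psi>. (\<forall>t. ((\<lambda>t. f (g ** mexp (t *\<^sub>R skewbasis i j))) has_real_derivative \<psi> t) (at t))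
             \<and> \<psi> differentiable (at 0)"
proof -
  obtain U F where UF: "SO6 \<subseteq> U" "Cinf_on U F" "\<And>x. x \<in> SO6 \<Longrightarrow> f x = F x"
    using f unfolding smooth_SO6_def by blast
  have eq: "(\<lambda>t. f (g ** mexp (t *\<^sub>R skewbasis i j))) = (\<lambda>t. F (cv g i j t))"
    using UF(3)[OF cv_SO6[OF g ij]] by (simp add: mexp_Rot[OF ij] cv_def)
  define \<psi> where "\<psi> t = (\<Sum>b\<in>Basis. (cvd g i j t \<bullet> b) * pderiv b F (cv g i j t))" for t
  have d1: "\<forall>t. ((\<lambda>t. f (g ** mexp (t *\<^sub>R skewbasis i j))) has_real_derivative \<psi> t) (at t)"
    unfolding eq \<psi>_def using chain_curve[OF UF(2,1) g ij] by blast
  have "(\<lambda>t. pderiv b F (cv g i j t)) differentiable (at 0)" if b: "b \<in> Basis" for b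
    using chain_curve[OF Cinf_pderiv[OF UF(2) b] UF(1) g ij, of 0] real_differentiable_def by blast
  then have "\<psi> differentiable (at 0)"
    unfolding \<psi>_def[abs_def] by (intro differentiable_sum) (auto intro!: differentiable_mult cvd_inner_diff)
  with d1 show ?thesis by blast
qed

lemma lap_term_lin:
  fixes \<phi> :: "'k \<Rightarrow> real \<Rightarrow> real"
  assumes fin: "finite K" and d: "\<And>k. k \<in> K \<Longrightarrow> \<exists>\<psi>. (\<forall>t. (\<phi> k has_real_derivative \<psi> t) (at t)) \<and> \<psi> differentiable (at 0)"
  shows "deriv (deriv (\<lambda>t. \<Sum>k\<in>K. c k * \<phi> k t)) 0 = (\<Sum>k\<in>K. c k * deriv (deriv (\<phi> k)) 0)"
proof -
  obtain \<psi> where \<psi>: "\<And>k t. k \<in> K \<Longrightarrow> (\<phi> k has_real_derivative \<psi> k t) (at t)"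
    "\<And>k. k \<in> K \<Longrightarrow> \<psi> k differentiable (at 0)"
    using d by metis
  have dphi: "deriv (\<phi> k) = \<psi> k" if "k \<in> K" for k
    using \<psi>(1)[OF that] DERIV_imp_deriv by blast
  have "((\<lambda>t. \<Sum>k\<in>K. c k * \<phi> k t) has_real_derivative (\<Sum>k\<in>K. c k * \<psi> k t)) (at t)" for t
    by (intro DERIV_sum DERIV_cmult \<psi>(1))
  then have ds: "deriv (\<lambda>t. \<Sum>k\<in>K. c k * \<phi> k t) = (\<lambda>t. \<Sum>k\<in>K. c k * \<psi> k t)"
    using DERIV_imp_deriv by blast
  have "((\<lambda>t. \<Sum>k\<in>K. c k * \<psi> k t) has_real_derivative (\<Sum>k\<in>K. c k * deriv (\<psi> k) 0)) (at 0)"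
    using \<psi>(2) by (intro DERIV_sum DERIV_cmult) (simp add: DERIV_deriv_iff_real_differentiable)
  then have "deriv (\<lambda>t. \<Sum>k\<in>K. c k * \<psi> k t) 0 = (\<Sum>k\<in>K. c k * deriv (\<psi> k) 0)"
    by (rule DERIV_imp_deriv)
  then show ?thesis unfolding ds using dphi by simp
qed

lemma swap_neg: "(\<Sum>k\<in>K. c k * - (\<Sum>p\<in>P. h k p)) = - (\<Sum>p\<in>P. \<Sum>k\<in>K. (c k * h k p :: real))"
  by (simp add: sum_distrib_left sum_negf) (rule sum.swap)

lemma laplace_lin:
  assumes fin: "finite K" and sm: "\<And>k. k \<in> K \<Longrightarrow> smooth_SO6 (fs k)" and g: "g \<in> SO6"
  shows "laplace (\<lambda>x. \<Sum>k\<in>K. c k * fs k x) g = (\<Sum>k\<in>K. c k * laplace (fs k) g)"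
proof -
  have "deriv (deriv (\<lambda>t. \<Sum>k\<in>K. c k * fs k (g ** mexp (t *\<^sub>R skewbasis i j)))) 0
      = (\<Sum>k\<in>K. c k * deriv (deriv (\<lambda>t. fs k (g ** mexp (t *\<^sub>R skewbasis i j)))) 0)"
    if "i < j" for i j :: 6
    using lap_term_lin[OF fin, of "\<lambda>k t. fs k (g ** mexp (t *\<^sub>R skewbasis i j))" c]
      smooth_curve[OF sm g, of _ i j] that by auto
  then have "laplace (\<lambda>x. \<Sum>k\<in>K. c k * fs k x) g =
     - (\<Sum>(i, j)\<in>{(i, j). i < j}. (\<Sum>k\<in>K. c k * deriv (deriv (\<lambda>t. fs k (g ** mexp (t *\<^sub>R skewbasis i j)))) 0))"
    unfolding laplace_def by (intro arg_cong[where f=uminus] sum.cong) auto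
  also have "\<dots> = (\<Sum>k\<in>K. c k * laplace (fs k) g)"
    unfolding laplace_def using swap_neg[where c=c and K=K and h="\<lambda>k (i,j). deriv (deriv (\<lambda>t. fs k (g ** mexp (t *\<^sub>R skewbasis i j)))) 0" and P="{(i, j). i < j}"]
    by (simp add: case_prod_unfold)
  finally show ?thesis .
qed


lemma deriv_local:
  fixes x v :: "'a::real_normed_vector" and H K :: "'a \<Rightarrow> real"
  assumes S: "open S" "x \<in> S" and eq: "\<And>y. y \<in> S \<Longrightarrow> H y = K y"
    and D: "((\<lambda>t. K (x + t *\<^sub>R v)) has_real_derivative D) (at 0)"
  shows "((\<lambda>t. H (x + t *\<^sub>R v)) has_real_derivative D) (at 0)"
proof -
  let ?T = "(\<lambda>t::real. x + t *\<^sub>R v) -` S"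
  have c: "continuous (at t) (\<lambda>t::real. x + t *\<^sub>R v)" for t by (intro continuous_intros)
  have "open ?T" by (rule continuous_open_vimage[OF S(1) c])
  moreover have "0 \<in> ?T" using S(2) by simp
  ultimately have ev: "eventually (\<lambda>t. H (x + t *\<^sub>R v) = K (x + t *\<^sub>R v)) (nhds 0)"
    unfolding eventually_nhds using eq by blast
  show ?thesis using DERIV_cong_ev[OF refl ev refl] D by simp
qed

lemma pderiv_eq_D: "((\<lambda>t. H (x + t *\<^sub>R v)) has_real_derivative D) (at 0) \<Longrightarrow> pderiv v H x = D"
  unfolding pderiv_def by (rule DERIV_imp_deriv)

lemma Cinf_DERIV: "Cinf_on U F \<Longrightarrow> vs \<in> lists Basis \<Longrightarrow> v \<in> Basis \<Longrightarrow> y \<in> U \<Longrightarrow>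
   ((\<lambda>t. iter_pderiv vs F (y + t *\<^sub>R v)) has_real_derivative iter_pderiv (v # vs) F y) (at 0)"
  unfolding Cinf_on_def by (simp add: pderiv_def DERIV_deriv_iff_real_differentiable)

lemma Cinf_on_add:
  fixes F G :: "'a::euclidean_space \<Rightarrow> real"
  assumes F: "Cinf_on U F" and G: "Cinf_on V G"
  shows "Cinf_on (U \<inter> V) (\<lambda>x. a * F x + b * G x)"
proof -
  let ?W = "U \<inter> V" and ?H = "\<lambda>x. a * F x + b * G x"
  have W: "open ?W" using Cinf_openD[OF F] Cinf_openD[OF G] by auto
  have step: "((\<lambda>t. iter_pderiv vs ?H (x + t *\<^sub>R v)) has_real_derivative
                 a * iter_pderiv (v # vs) F x + b * iter_pderiv (v # vs) G x) (at 0)"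
    if vs: "vs \<in> lists (Basis :: 'a set)" and rep: "\<forall>y\<in>?W. iter_pderiv vs ?H y = a * iter_pderiv vs F y + b * iter_pderiv vs G y"
      and v: "v \<in> Basis" and x: "x \<in> ?W" for vs v x
  proof (rule deriv_local[OF W x])
    show "\<And>y. y \<in> ?W \<Longrightarrow> iter_pderiv vs ?H y = a * iter_pderiv vs F y + b * iter_pderiv vs G y" using rep by blast
    show "((\<lambda>t. a * iter_pderiv vs F (x + t *\<^sub>R v) + b * iter_pderiv vs G (x + t *\<^sub>R v)) has_real_derivative
        a * iter_pderiv (v # vs) F x + b * iter_pderiv (v # vs) G x) (at 0)"
      using x by (intro DERIV_add DERIV_cmult Cinf_DERIV[OF F vs v] Cinf_DERIV[OF G vs v]) auto
  qed
  have rep: "\<forall>y\<in>?W. iter_pderiv vs ?H y = a * iter_pderiv vs F y + b * iter_pderiv vs G y"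
    if "vs \<in> lists (Basis :: 'a set)" for vs
    using that
  proof (induction vs)
    case Nil then show ?case by simp
  next
    case (Cons v vs)
    then have vs: "vs \<in> lists Basis" and v: "v \<in> Basis" by auto
    show ?case
    proof
      fix y assume y: "y \<in> ?W"
      show "iter_pderiv (v # vs) ?H y = a * iter_pderiv (v # vs) F y + b * iter_pderiv (v # vs) G y"
      proof -
      have IH: "\<forall>y\<in>?W. iter_pderiv vs ?H y = a * iter_pderiv vs F y + b * iter_pderiv vs G y"
        using Cons.IH vs by blast
      show ?thesis using pderiv_eq_D[OF step[OF vs IH v y]] by simp
    qed
    qed
  qed
  show ?thesis unfolding Cinf_on_def
  proof (intro conjI W ballI)
    fix vs :: "'a list" assume vs: "vs \<in> lists Basis"
    have cF: "continuous_on ?W (iter_pderiv vs F)"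
      using F vs unfolding Cinf_on_def by (meson Int_lower1 continuous_on_subset)
    have cG: "continuous_on ?W (iter_pderiv vs G)"
      using G vs unfolding Cinf_on_def by (meson Int_lower2 continuous_on_subset)
    have "continuous_on ?W (\<lambda>y. a * iter_pderiv vs F y + b * iter_pderiv vs G y)"
      by (intro continuous_on_add continuous_on_mult_left cF cG)
    then show "continuous_on ?W (iter_pderiv vs ?H)"
      by (rule continuous_on_eq) (use rep[OF vs] in auto)
    show "(\<lambda>t. iter_pderiv vs ?H (x + t *\<^sub>R v)) differentiable (at 0)" if "v \<in> Basis" "x \<in> ?W" for v x
      using step[OF vs rep[OF vs] that] real_differentiable_def by blast
  qed
qed

lemma Cinf_on_comp_lin:
  fixes L :: "'a::euclidean_space \<Rightarrow> 'a" and F :: "'a \<Rightarrow> real"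
  assumes F: "Cinf_on U F" and L: "linear L"
    and B: "\<And>b. b \<in> Basis \<Longrightarrow> \<exists>b'\<in>Basis. L b = b' \<or> L b = - b'"
  shows "Cinf_on (L -` U) (\<lambda>x. F (L x))"
proof -
  let ?V = "L -` U" and ?H = "\<lambda>x. F (L x)"
  have Bt: "\<exists>v' \<tau>. v' \<in> Basis \<and> L v = \<tau> *\<^sub>R v'" if v: "v \<in> Basis" for v
  proof -
    obtain b' where "b' \<in> Basis" "L v = b' \<or> L v = - b'" using B[OF v] by blast
    then show ?thesis by (metis scaleR_minus1_left scaleR_one)
  qed
  have cL: "continuous (at x) L" for x using L by (simp add: linear_continuous_at linear_conv_bounded_linear)
  have V: "open ?V" by (rule continuous_open_vimage[OF Cinf_openD[OF F] cL])
  have Ladd: "L (x + t *\<^sub>R v) = L x + t *\<^sub>R L v" for x t v using L by (simp add: linear_add linear_scale)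
  have step: "((\<lambda>t. iter_pderiv vs ?H (x + t *\<^sub>R v)) has_real_derivative
                 \<sigma> * \<tau> * iter_pderiv (v' # ws) F (L x)) (at 0)"
    if ws: "ws \<in> lists (Basis :: 'a set)" and rep: "\<forall>y\<in>?V. iter_pderiv vs ?H y = \<sigma> * iter_pderiv ws F (L y)"
      and v': "v' \<in> Basis" and Lv: "L v = \<tau> *\<^sub>R v'" and x: "x \<in> ?V" for vs :: "'a list" and ws \<sigma> \<tau> v v' x
  proof (rule deriv_local[OF V x])
    show "\<And>y. y \<in> ?V \<Longrightarrow> iter_pderiv vs ?H y = \<sigma> * iter_pderiv ws F (L y)" using rep by blast
    have K: "((\<lambda>s. iter_pderiv ws F (L x + s *\<^sub>R v')) has_real_derivative iter_pderiv (v' # ws) F (L x)) (at (\<tau> * 0))"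
      using Cinf_DERIV[OF F ws v'] x by simp
    have "((\<lambda>t. \<sigma> * iter_pderiv ws F (L x + (\<tau> * t) *\<^sub>R v')) has_real_derivative
            \<sigma> * (iter_pderiv (v' # ws) F (L x) * \<tau>)) (at 0)"
    proof -
      have inner: "((\<lambda>t. \<tau> * t) has_real_derivative \<tau>) (at 0)" by (auto intro!: derivative_eq_intros)
      show ?thesis using DERIV_cmult[OF DERIV_chain2[where g="\<lambda>t. \<tau> * t", OF K inner], of \<sigma>] by simp
    qed
    then show "((\<lambda>t. \<sigma> * iter_pderiv ws F (L (x + t *\<^sub>R v))) has_real_derivative
            \<sigma> * \<tau> * iter_pderiv (v' # ws) F (L x)) (at 0)"
      by (simp add: Ladd Lv mult_ac)
  qed
  have rep: "\<exists>ws\<in>lists Basis. \<exists>\<sigma>. \<forall>y\<in>?V. iter_pderiv vs ?H y = \<sigma> * iter_pderiv ws F (L y)"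
    if "vs \<in> lists (Basis :: 'a set)" for vs
    using that
  proof (induction vs)
    case Nil then show ?case by (intro bexI[of _ "[]"] exI[of _ 1]) auto
  next
    case (Cons v vs)
    then have vs: "vs \<in> lists Basis" and v: "v \<in> Basis" by auto
    obtain ws \<sigma> where ws: "ws \<in> lists Basis" "\<forall>y\<in>?V. iter_pderiv vs ?H y = \<sigma> * iter_pderiv ws F (L y)"
      using Cons.IH vs by blast
    obtain v' \<tau> where v': "v' \<in> Basis" "L v = \<tau> *\<^sub>R v'" using Bt[OF v] by blast
    show ?case
    proof (intro bexI[of _ "v' # ws"] exI[of _ "\<sigma> * \<tau>"] ballI)
      fix y assume y: "y \<in> ?V"
      show "iter_pderiv (v # vs) ?H y = \<sigma> * \<tau> * iter_pderiv (v' # ws) F (L y)"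
        using pderiv_eq_D[OF step[OF ws v' y]] by simp
    qed (use ws v' in auto)
  qed
  show ?thesis unfolding Cinf_on_def
  proof (intro conjI V ballI)
    fix vs :: "'a list" assume vs: "vs \<in> lists Basis"
    obtain ws \<sigma> where ws: "ws \<in> lists Basis" "\<forall>y\<in>?V. iter_pderiv vs ?H y = \<sigma> * iter_pderiv ws F (L y)"
      using rep[OF vs] by blast
    have c1: "continuous_on U (iter_pderiv ws F)" using F ws unfolding Cinf_on_def by blast
    have c2: "continuous_on ?V L" using cL by (simp add: continuous_at_imp_continuous_on)
    have "continuous_on ?V (\<lambda>y. iter_pderiv ws F (L y))"
      by (rule continuous_on_compose2[OF c1 c2]) auto
    then have "continuous_on ?V (\<lambda>y. \<sigma> * iter_pderiv ws F (L y))"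
      by (rule continuous_on_mult_left)
    then show "continuous_on ?V (iter_pderiv vs ?H)"
      by (rule continuous_on_eq) (use ws(2) in auto)
    show "(\<lambda>t. iter_pderiv vs ?H (x + t *\<^sub>R v)) differentiable (at 0)" if v: "v \<in> Basis" and x: "x \<in> ?V" for v x
    proof -
      obtain v' \<tau> where v': "v' \<in> Basis" "L v = \<tau> *\<^sub>R v'" using Bt[OF v] by blast
      show ?thesis using step[OF ws v' x] real_differentiable_def by blast
    qed
  qed
qed


lemma iter_zero: "iter_pderiv vs (\<lambda>x. 0 :: real) = (\<lambda>x. 0)"
  by (induction vs) (auto simp: pderiv_def)

lemma Cinf_zero: "Cinf_on UNIV (\<lambda>x::'a::euclidean_space. 0 :: real)"
  unfolding Cinf_on_def by (simp add: iter_zero)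

lemma smooth_zero: "smooth_SO6 (\<lambda>x. 0)"
  unfolding smooth_SO6_def using Cinf_zero by blast

lemma smooth_lin:
  assumes "smooth_SO6 f" "smooth_SO6 h"
  shows "smooth_SO6 (\<lambda>x. a * f x + b * h x)"
proof -
  obtain U F where U: "SO6 \<subseteq> U" "Cinf_on U F" "\<forall>g\<in>SO6. f g = F g" "\<forall>x. x \<notin> SO6 \<longrightarrow> f x = 0"
    using assms(1) unfolding smooth_SO6_def by blast
  obtain V G where V: "SO6 \<subseteq> V" "Cinf_on V G" "\<forall>g\<in>SO6. h g = G g" "\<forall>x. x \<notin> SO6 \<longrightarrow> h x = 0"
    using assms(2) unfolding smooth_SO6_def by blast
  have C: "Cinf_on (U \<inter> V) (\<lambda>x. a * F x + b * G x)" by (rule Cinf_on_add[OF U(2) V(2)])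
  show ?thesis unfolding smooth_SO6_def
  proof (intro conjI exI[of _ "U \<inter> V"] exI[of _ "\<lambda>x. a * F x + b * G x"] C allI impI ballI)
    show "SO6 \<subseteq> U \<inter> V" using U(1) V(1) by blast
    show "\<And>g. g \<in> SO6 \<Longrightarrow> a * f g + b * h g = a * F g + b * G g" using U(3) V(3) by simp
    show "\<And>x. x \<notin> SO6 \<Longrightarrow> a * f x + b * h x = 0" using U(4) V(4) by simp
  qed
qed

lemma smooth_sum:
  assumes "finite K" "\<And>k. k \<in> K \<Longrightarrow> smooth_SO6 (fs k)"
  shows "smooth_SO6 (\<lambda>x. \<Sum>k\<in>K. c k * fs k x)"
  using assms
proof (induction K rule: finite_induct)
  case empty then show ?case using smooth_zero by simp
next
  case (insert k K)
  have "smooth_SO6 (\<lambda>x. c k * fs k x + 1 * (\<Sum>k\<in>K. c k * fs k x))"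
    using insert by (intro smooth_lin) auto
  then show ?case using insert.hyps by simp
qed

lemma Basis_mat6: "(Basis :: mat6 set) = {munit i j | i j. True}"
proof -
  have "axis i (axis j (1::real)) = munit i j" for i j :: 6
    unfolding munit_def axis_def by (auto simp: vec_eq_iff)
  then show ?thesis unfolding Basis_vec_def by auto
qed

lemma linear_left_mult: "linear (\<lambda>x::mat6. (M::mat6) ** x)"
  by (rule linearI) (simp_all add: matrix_add_ldistrib mat_scaleR_right)

lemma smooth_trans:
  fixes M :: mat6
  assumes f: "smooth_SO6 f" and M: "M \<in> SO6"
    and B: "\<And>i j. \<exists>i'. M ** munit i j = munit i' j \<or> M ** munit i j = - munit i' j"
  shows "smooth_SO6 (\<lambda>x. f (M ** x))"
proof -
  obtain U F where U: "SO6 \<subseteq> U" "Cinf_on U F" "\<forall>g\<in>SO6. f g = F g" "\<forall>x. x \<notin> SO6 \<longrightarrow> f x = 0"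
    using f unfolding smooth_SO6_def by blast
  have BB: "\<exists>b'\<in>Basis. M ** b = b' \<or> M ** b = - b'" if b: "b \<in> Basis" for b :: mat6
  proof -
    obtain i j where ij: "b = munit i j" using b unfolding Basis_mat6 by blast
    obtain i' where i': "M ** munit i j = munit i' j \<or> M ** munit i j = - munit i' j" using B by blast
    have "munit i' j \<in> Basis" unfolding Basis_mat6 by blast
    then show ?thesis using i' ij by blast
  qed
  have C: "Cinf_on ((\<lambda>x. M ** x) -` U) (\<lambda>x. F (M ** x))"
    by (rule Cinf_on_comp_lin[OF U(2) linear_left_mult BB])
  show ?thesis unfolding smooth_SO6_def
  proof (intro conjI exI[of _ "(\<lambda>x. M ** x) -` U"] exI[of _ "\<lambda>x. F (M ** x)"] C allI impI ballI)
    show "SO6 \<subseteq> (\<lambda>x. M ** x) -` U" using U(1) SO6_mult[OF M] by auto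
    show "\<And>g. g \<in> SO6 \<Longrightarrow> f (M ** g) = F (M ** g)" using U(3) SO6_mult[OF M] by auto
    show "\<And>x. x \<notin> SO6 \<Longrightarrow> f (M ** x) = 0" using U(4) SO6_mult_iff[OF M] by auto
  qed
qed

lemma dgs_munit: "dgs A ** munit i j = (if i \<in> A then - munit i j else munit i j)"
  by (auto simp: vec_eq_iff dgs_left munit_nth)

lemma pm_munit: "(\<And>k. p (p k) = k) \<Longrightarrow> pm p ** munit i j = munit (p i) j"
  by (auto simp: vec_eq_iff pm_left munit_nth)

lemma smooth_dgs: "smooth_SO6 f \<Longrightarrow> dgs A \<in> SO6 \<Longrightarrow> smooth_SO6 (\<lambda>x. f (dgs A ** x))"
  by (rule smooth_trans) (auto simp: dgs_munit)

lemma smooth_pm: "smooth_SO6 f \<Longrightarrow> pm p \<in> SO6 \<Longrightarrow> (\<And>k. p (p k) = k) \<Longrightarrow> smooth_SO6 (\<lambda>x. f (pm p ** x))"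
  by (rule smooth_trans) (auto simp: pm_munit)


definition Ev :: "6 set set" where "Ev = {A. even (card A)}"
definition chi :: "6 set \<Rightarrow> 6 set \<Rightarrow> real" where "chi S A = (-1) ^ card (S \<inter> A)"

abbreviation sdf :: "'a set \<Rightarrow> 'a set \<Rightarrow> 'a set" where "sdf A B \<equiv> (A - B) \<union> (B - A)"

lemma card_sdf: "finite A \<Longrightarrow> finite B \<Longrightarrow> card (sdf A B) + 2 * card (A \<inter> B) = card A + card B"
proof -
  assume f: "finite A" "finite B"
  have "card (sdf A B) = card (A - B) + card (B - A)" using f by (intro card_Un_disjoint) auto
  moreover have "card (A - B) + card (A \<inter> B) = card A" using f by (metis Diff_Diff_Int card_Diff_subset_Int Int_lower1 card_mono diff_add_inverse2 finite_Int le_add_diff_inverse2 Int_commute inf.absorb_iff2 le_add_diff_inverse)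
  moreover have "card (B - A) + card (A \<inter> B) = card B" using f by (metis Int_commute Diff_Diff_Int card_Diff_subset_Int Int_lower1 card_mono le_add_diff_inverse2 finite_Int)
  ultimately show ?thesis by simp
qed

lemma even_sdf: "finite A \<Longrightarrow> finite B \<Longrightarrow> even (card (sdf A B)) \<longleftrightarrow> (even (card A) \<longleftrightarrow> even (card B))"
  using card_sdf[of A B] by (metis even_add even_mult_iff even_numeral)

lemma Ev_sdf: "A \<in> Ev \<Longrightarrow> B \<in> Ev \<Longrightarrow> sdf A B \<in> Ev"
  unfolding Ev_def using even_sdf[of A B] by simp

lemma chi_sdf: "chi S (sdf A B) = chi S A * chi S B"
proof -
  have "S \<inter> sdf A B = sdf (S \<inter> A) (S \<inter> B)" by auto
  then have "even (card (S \<inter> sdf A B)) \<longleftrightarrow> (even (card (S \<inter> A)) \<longleftrightarrow> even (card (S \<inter> B)))"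
    using even_sdf[of "S \<inter> A" "S \<inter> B"] by simp
  then show ?thesis unfolding chi_def by (auto simp: minus_one_power_iff)
qed

lemma chi_sdf_S: "chi (sdf S S') A = chi S A * chi S' A"
proof -
  have "sdf S S' \<inter> A = sdf (S \<inter> A) (S' \<inter> A)" by auto
  then have "even (card (sdf S S' \<inter> A)) \<longleftrightarrow> (even (card (S \<inter> A)) \<longleftrightarrow> even (card (S' \<inter> A)))"
    using even_sdf[of "S \<inter> A" "S' \<inter> A"] by simp
  then show ?thesis unfolding chi_def by (auto simp: minus_one_power_iff)
qed

lemma chi_sq: "chi S A * chi S A = 1" unfolding chi_def by (simp flip: power_add)

lemma chi_empty: "chi {} A = 1" unfolding chi_def by simp

lemma chi_UNIV_Ev: "A \<in> Ev \<Longrightarrow> chi UNIV A = 1" unfolding chi_def Ev_def by simp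

lemma finite_Ev: "finite Ev" by simp

lemma sum_sdf_reindex:
  assumes B: "B \<in> Ev"
  shows "(\<Sum>A\<in>Ev. h (sdf A B)) = (\<Sum>A\<in>Ev. h A)"
  by (rule sum.reindex_bij_witness[of _ "\<lambda>A. sdf A B" "\<lambda>A. sdf A B"]) (auto simp: Ev_sdf[OF _ B])

lemma chi_zero_sum:
  assumes i: "i \<in> T" and j: "j \<notin> T"
  shows "(\<Sum>A\<in>Ev. chi T A) = 0"
proof -
  have ij: "{i, j} \<in> Ev" using i j unfolding Ev_def by (cases "i = j") auto
  have c: "chi T {i, j} = -1" unfolding chi_def using i j by (subgoal_tac "T \<inter> {i,j} = {i}") auto
  have "(\<Sum>A\<in>Ev. chi T A) = (\<Sum>A\<in>Ev. chi T (sdf A {i,j}))" by (rule sum_sdf_reindex[OF ij, symmetric])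
  also have "\<dots> = - (\<Sum>A\<in>Ev. chi T A)" by (simp add: chi_sdf c sum_negf)
  finally show ?thesis by simp
qed

lemma card_Ev: "card Ev = 32"
proof -
  let ?Od = "{A :: 6 set. odd (card A)}"
  have "bij_betw (\<lambda>A. sdf A {1}) Ev ?Od"
    by (rule bij_betw_byWitness[of _ "\<lambda>A. sdf A {1}"]) (auto simp: Ev_def even_sdf)
  then have "card Ev = card ?Od" by (rule bij_betw_same_card)
  moreover have "card Ev + card ?Od = card (Ev \<union> ?Od)"
    by (rule card_Un_disjoint[symmetric]) (auto simp: Ev_def)
  moreover have "Ev \<union> ?Od = UNIV" by (auto simp: Ev_def)
  moreover have "card (UNIV :: 6 set set) = 64" by (simp add: card_UNIV_set)
  ultimately show ?thesis by simp
qed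

lemma chi_sum_empty: "(\<Sum>A\<in>Ev. chi {} A) = 32" by (simp add: chi_empty card_Ev)


lemma set6_eq': "(A::6 set) = B \<longleftrightarrow> (1 \<in> A \<longleftrightarrow> 1 \<in> B) \<and> (2 \<in> A \<longleftrightarrow> 2 \<in> B) \<and> (3 \<in> A \<longleftrightarrow> 3 \<in> B) \<and>
   (4 \<in> A \<longleftrightarrow> 4 \<in> B) \<and> (5 \<in> A \<longleftrightarrow> 5 \<in> B) \<and> (6 \<in> A \<longleftrightarrow> 6 \<in> B)"
  by (auto simp: set_eq_iff forall_6[of "\<lambda>x. x \<in> A \<longleftrightarrow> x \<in> B"])

lemma card_ind: "card (A::6 set) = (\<Sum>i\<in>UNIV. if i \<in> A then 1 else 0)"
  by (simp add: sum.If_cases)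

lemma ev6: "A \<in> Ev \<longleftrightarrow> (1 \<in> A \<longleftrightarrow> (2 \<in> A \<longleftrightarrow> (3 \<in> A \<longleftrightarrow> (4 \<in> A \<longleftrightarrow> (5 \<in> A \<longleftrightarrow> 6 \<in> A)))))"
  unfolding Ev_def mem_Collect_eq card_ind sum_6
  by (cases "1 \<in> A"; cases "2 \<in> A"; cases "3 \<in> A"; cases "4 \<in> A"; cases "5 \<in> A"; cases "6 \<in> A") simp_all

lemma chi_pair: "i \<noteq> j \<Longrightarrow> chi {i, j} A = (if (i \<in> A \<longleftrightarrow> j \<in> A) then 1 else -1)"
proof -
  assume ij: "i \<noteq> j"
  consider "i \<in> A" "j \<in> A" | "i \<in> A" "j \<notin> A" | "i \<notin> A" "j \<in> A" | "i \<notin> A" "j \<notin> A" by blast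
  then show ?thesis
  proof cases
    case 1 then have "{i,j} \<inter> A = {i,j}" by auto then show ?thesis using 1 ij unfolding chi_def by simp
  next
    case 2 then have "{i,j} \<inter> A = {i}" by auto then show ?thesis using 2 ij unfolding chi_def by simp
  next
    case 3 then have "{i,j} \<inter> A = {j}" by auto then show ?thesis using 3 ij unfolding chi_def by simp
  next
    case 4 then have "{i,j} \<inter> A = {}" by auto then show ?thesis using 4 ij unfolding chi_def by simp
  qed
qed

lemma Pr1_Ev: "Pr1 A \<Longrightarrow> A \<in> Ev" unfolding ev6 Pr1_def by auto
lemma Pr2_Ev: "Pr2 A \<Longrightarrow> A \<in> Ev" unfolding ev6 Pr2_def by auto

lemma Ev_SO6: "A \<in> Ev \<Longrightarrow> dgs A \<in> SO6"
  unfolding dgs_SO6 det_dgs prod_6 ev6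
  by (cases "1 \<in> A"; cases "2 \<in> A"; cases "3 \<in> A"; cases "4 \<in> A"; cases "5 \<in> A"; cases "6 \<in> A") simp_all

lemma sumchi1: "A \<in> Ev \<Longrightarrow> chi {} A + chi {4,5} A + chi {4,6} A + chi {5,6} A = (if Pr1 A then 4 else 0)"
  unfolding ev6 Pr1_def chi_empty by (simp add: chi_pair)

lemma sumchi2: "A \<in> Ev \<Longrightarrow> chi {} A + chi {1,2} A + chi {3,4} A + chi {5,6} A = (if Pr2 A then 4 else 0)"
  unfolding ev6 Pr2_def chi_empty by (simp add: chi_pair)

definition Pj :: "6 set \<Rightarrow> (mat6 \<Rightarrow> real) \<Rightarrow> mat6 \<Rightarrow> real" where
  "Pj S f = (\<lambda>x. \<Sum>A\<in>Ev. (chi S A / 32) * f (dgs A ** x))"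

definition Eig :: "6 set \<Rightarrow> (mat6 \<Rightarrow> real) \<Rightarrow> bool" where
  "Eig S u \<longleftrightarrow> (\<forall>A\<in>Ev. \<forall>x. u (dgs A ** x) = chi S A * u x)"

lemma Pj_Eig: "Eig S (Pj S f)"
  unfolding Eig_def
proof (intro ballI allI)
  fix B x assume B: "B \<in> Ev"
  have "Pj S f (dgs B ** x) = (\<Sum>A\<in>Ev. (chi S A / 32) * f (dgs (sdf A B) ** x))"
    unfolding Pj_def by (simp add: matrix_mul_assoc dgs_mult)
  also have "\<dots> = (\<Sum>A\<in>Ev. (chi S (sdf A B) / 32) * f (dgs (sdf (sdf A B) B) ** x))"
    by (rule sum_sdf_reindex[OF B, symmetric])
  also have "\<dots> = (\<Sum>A\<in>Ev. chi S B * ((chi S A / 32) * f (dgs A ** x)))"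
  proof (rule sum.cong[OF refl])
    fix A have "sdf (sdf A B) B = A" by auto
    then show "(chi S (sdf A B) / 32) * f (dgs (sdf (sdf A B) B) ** x) = chi S B * ((chi S A / 32) * f (dgs A ** x))"
      by (simp add: chi_sdf)
  qed
  also have "\<dots> = chi S B * Pj S f x" unfolding Pj_def by (simp add: sum_distrib_left)
  finally show "Pj S f (dgs B ** x) = chi S B * Pj S f x" .
qed

lemma Pj_add: "Pj S (\<lambda>x. u x + v x) = (\<lambda>x. Pj S u x + Pj S v x)"
  unfolding Pj_def by (simp add: distrib_left sum.distrib)

lemma Pj_scale: "Pj S (\<lambda>x. c * u x) = (\<lambda>x. c * Pj S u x)"
  unfolding Pj_def by (simp add: sum_distrib_left mult_ac)

lemma Pj_orth: assumes "Eig S' u" shows "Pj S u x = (\<Sum>A\<in>Ev. chi (sdf S S') A) / 32 * u x"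
proof -
  have "Pj S u x = (\<Sum>A\<in>Ev. (chi S A * chi S' A / 32) * u x)"
    using assms unfolding Pj_def Eig_def by (intro sum.cong) (auto simp: mult_ac)
  also have "\<dots> = (\<Sum>A\<in>Ev. chi S A * chi S' A) / 32 * u x"
    by (simp add: sum_divide_distrib[symmetric] sum_distrib_right[symmetric])
  finally show ?thesis by (simp add: chi_sdf_S)
qed

lemma Pj_same: "Eig S u \<Longrightarrow> Pj S u = u"
  using Pj_orth[of S u S] by (auto simp: chi_sum_empty)

lemma Pj_diff: "Eig S' u \<Longrightarrow> i \<in> sdf S S' \<Longrightarrow> j \<notin> sdf S S' \<Longrightarrow> Pj S u = (\<lambda>x. 0)"
  using Pj_orth[of S' u S] chi_zero_sum[of i "sdf S S'" j] by auto

lemma card_inter_vimage: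
  assumes p: "\<And>k. p (p k) = (k::6)"
  shows "card (S \<inter> p -` A) = card (p -` S \<inter> A)"
proof -
  have inj: "inj p" by (metis p injI)
  have "p ` (S \<inter> p -` A) = p -` S \<inter> A"
  proof
    show "p ` (S \<inter> p -` A) \<subseteq> p -` S \<inter> A" using p by auto
    show "p -` S \<inter> A \<subseteq> p ` (S \<inter> p -` A)"
    proof
      fix y assume y: "y \<in> p -` S \<inter> A"
      then have "p y \<in> S \<inter> p -` A" using p by auto
      then show "y \<in> p ` (S \<inter> p -` A)" using p[of y] by (metis image_eqI)
    qed
  qed
  then show ?thesis using card_image[OF inj_on_subset[OF inj subset_UNIV]] by metis
qed

lemma Ev_vimage: assumes p: "\<And>k. p (p k) = (k::6)" and A: "A \<in> Ev" shows "p -` A \<in> Ev"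
  using card_inter_vimage[OF p, of UNIV A] A unfolding Ev_def by simp

lemma Lm_Eig:
  assumes u: "Eig S u" and p: "\<And>k. p (p k) = (k::6)"
  shows "Eig (p -` S) (\<lambda>x. u (pm p ** x))"
  unfolding Eig_def
proof (intro ballI allI)
  fix A x assume A: "A \<in> Ev"
  have "u (pm p ** (dgs A ** x)) = u (dgs (p -` A) ** (pm p ** x))"
    by (simp add: matrix_mul_assoc pm_dgs)
  also have "\<dots> = chi S (p -` A) * u (pm p ** x)" using u Ev_vimage[OF p A] unfolding Eig_def by blast
  also have "chi S (p -` A) = chi (p -` S) A" unfolding chi_def using card_inter_vimage[OF p] by simp
  finally show "u (pm p ** (dgs A ** x)) = chi (p -` S) A * u (pm p ** x)" .
qed

lemma Eig_inv: "Eig S u \<Longrightarrow> A \<in> Ev \<Longrightarrow> chi S A = 1 \<Longrightarrow> u (dgs A ** x) = u x"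
  unfolding Eig_def by simp

lemma sg1_S: "sg1 -` {4,5} = {1,2}" "sg1 -` {1,2} = {4,5}"
  by (auto simp: set6_eq' sg1_simps)
lemma sg2_S: "sg2 -` {4,6} = {3,4}" "sg2 -` {3,4} = {4,6}"
  by (auto simp: set6_eq' sg2_simps)

lemma decomp1:
  assumes f: "\<And>A x. Pr1 A \<Longrightarrow> f (dgs A ** x) = f x"
  shows "Pj {} f x + Pj {4,5} f x + Pj {4,6} f x + Pj {5,6} f x = f x"
proof -
  let ?c = "\<lambda>A. chi {} A + chi {4,5} A + chi {4,6} A + chi {5,6} A"
  have "Pj {} f x + Pj {4,5} f x + Pj {4,6} f x + Pj {5,6} f x = (\<Sum>A\<in>Ev. ?c A / 32 * f (dgs A ** x))"
    unfolding Pj_def by (simp add: sum.distrib[symmetric] add_divide_distrib distrib_right)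
  also have "\<dots> = (\<Sum>A\<in>Ev. ?c A / 32 * f x)"
  proof (rule sum.cong[OF refl])
    fix A assume A: "A \<in> Ev"
    show "?c A / 32 * f (dgs A ** x) = ?c A / 32 * f x"
      using sumchi1[OF A] f[of A x] by (cases "Pr1 A") auto
  qed
  also have "\<dots> = (\<Sum>A\<in>Ev. ?c A) / 32 * f x" by (simp add: sum_divide_distrib sum_distrib_right)
  also have "(\<Sum>A\<in>Ev. ?c A) = 32"
    using chi_sum_empty chi_zero_sum[of 4 "{4,5}" 1] chi_zero_sum[of 4 "{4,6}" 1] chi_zero_sum[of 5 "{5,6}" 1]
    by (simp add: sum.distrib)
  finally show ?thesis by simp
qed

lemma decomp2:
  assumes f: "\<And>A x. Pr2 A \<Longrightarrow> f (dgs A ** x) = f x"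
  shows "Pj {} f x + Pj {1,2} f x + Pj {3,4} f x + Pj {5,6} f x = f x"
proof -
  let ?c = "\<lambda>A. chi {} A + chi {1,2} A + chi {3,4} A + chi {5,6} A"
  have "Pj {} f x + Pj {1,2} f x + Pj {3,4} f x + Pj {5,6} f x = (\<Sum>A\<in>Ev. ?c A / 32 * f (dgs A ** x))"
    unfolding Pj_def by (simp add: sum.distrib[symmetric] add_divide_distrib distrib_right)
  also have "\<dots> = (\<Sum>A\<in>Ev. ?c A / 32 * f x)"
  proof (rule sum.cong[OF refl])
    fix A assume A: "A \<in> Ev"
    show "?c A / 32 * f (dgs A ** x) = ?c A / 32 * f x"
      using sumchi2[OF A] f[of A x] by (cases "Pr2 A") auto
  qed
  also have "\<dots> = (\<Sum>A\<in>Ev. ?c A) / 32 * f x" by (simp add: sum_divide_distrib sum_distrib_right)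
  also have "(\<Sum>A\<in>Ev. ?c A) = 32"
    using chi_sum_empty chi_zero_sum[of 1 "{1,2}" 3] chi_zero_sum[of 3 "{3,4}" 1] chi_zero_sum[of 5 "{5,6}" 1]
    by (simp add: sum.distrib)
  finally show ?thesis by simp
qed


definition Tm :: "(mat6 \<Rightarrow> real) \<Rightarrow> mat6 \<Rightarrow> real" where
  "Tm f = (\<lambda>x. Pj {} f x + Pj {4,5} f (pm sg1 ** x) + Pj {4,6} f (pm sg2 ** x) + Pj {5,6} f x)"
definition Ti :: "(mat6 \<Rightarrow> real) \<Rightarrow> mat6 \<Rightarrow> real" where
  "Ti f = (\<lambda>x. Pj {} f x + Pj {1,2} f (pm sg1 ** x) + Pj {3,4} f (pm sg2 ** x) + Pj {5,6} f x)"

lemma Pj_diff': "Eig S' u \<Longrightarrow> i \<in> sdf S S' \<Longrightarrow> j \<notin> sdf S S' \<Longrightarrow> Pj S u x = 0"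
  using Pj_diff by metis

lemma Lm1: "Eig S u \<Longrightarrow> Eig (sg1 -` S) (\<lambda>x. u (pm sg1 ** x))" by (rule Lm_Eig[OF _ sg1_inv])
lemma Lm2: "Eig S u \<Longrightarrow> Eig (sg2 -` S) (\<lambda>x. u (pm sg2 ** x))" by (rule Lm_Eig[OF _ sg2_inv])

lemma pm1_cancel: "pm sg1 ** (pm sg1 ** x) = x" by (simp add: matrix_mul_assoc pm1(2))
lemma pm2_cancel: "pm sg2 ** (pm sg2 ** x) = x" by (simp add: matrix_mul_assoc pm2(2))

lemma Ti_Tm:
  assumes f: "\<And>A x. Pr1 A \<Longrightarrow> f (dgs A ** x) = f x"
  shows "Ti (Tm f) = f"
proof
  fix x
  define u1 where "u1 = Pj {} f"
  define u2 where "u2 = (\<lambda>x. Pj {4,5} f (pm sg1 ** x))"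
  define u3 where "u3 = (\<lambda>x. Pj {4,6} f (pm sg2 ** x))"
  define u4 where "u4 = Pj {5,6} f"
  have e1: "Eig {} u1" unfolding u1_def by (rule Pj_Eig)
  have e2: "Eig {1,2} u2" unfolding u2_def using Lm1[OF Pj_Eig] sg1_S by metis
  have e3: "Eig {3,4} u3" unfolding u3_def using Lm2[OF Pj_Eig] sg2_S by metis
  have e4: "Eig {5,6} u4" unfolding u4_def by (rule Pj_Eig)
  have T: "Tm f = (\<lambda>x. u1 x + u2 x + u3 x + u4 x)" unfolding Tm_def u1_def u2_def u3_def u4_def by simp
  have P0: "Pj {} (Tm f) y = Pj {} f y" for y
    unfolding T Pj_add using Pj_same[OF e1] Pj_diff'[OF e2, of 1 "{}" 3] Pj_diff'[OF e3, of 3 "{}" 1] Pj_diff'[OF e4, of 5 "{}" 1]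
    by (simp add: u1_def)
  have P12: "Pj {1,2} (Tm f) y = u2 y" for y
    unfolding T Pj_add using Pj_same[OF e2] Pj_diff'[OF e1, of 1 "{1,2}" 3] Pj_diff'[OF e3, of 1 "{1,2}" 5] Pj_diff'[OF e4, of 1 "{1,2}" 3]
    by simp
  have P34: "Pj {3,4} (Tm f) y = u3 y" for y
    unfolding T Pj_add using Pj_same[OF e3] Pj_diff'[OF e1, of 3 "{3,4}" 1] Pj_diff'[OF e2, of 1 "{3,4}" 5] Pj_diff'[OF e4, of 3 "{3,4}" 1]
    by simp
  have P56: "Pj {5,6} (Tm f) y = Pj {5,6} f y" for y
    unfolding T Pj_add using Pj_same[OF e4] Pj_diff'[OF e1, of 5 "{5,6}" 1] Pj_diff'[OF e2, of 1 "{5,6}" 3] Pj_diff'[OF e3, of 3 "{5,6}" 1]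
    by (simp add: u4_def)
  have "Ti (Tm f) x = Pj {} f x + Pj {4,5} f x + Pj {4,6} f x + Pj {5,6} f x"
    unfolding Ti_def using P0 P12 P34 P56 by (simp add: u2_def u3_def pm1_cancel pm2_cancel)
  also have "\<dots> = f x" by (rule decomp1[OF f])
  finally show "Ti (Tm f) x = f x" .
qed

lemma Tm_Ti:
  assumes f: "\<And>A x. Pr2 A \<Longrightarrow> f (dgs A ** x) = f x"
  shows "Tm (Ti f) = f"
proof
  fix x
  define u1 where "u1 = Pj {} f"
  define u2 where "u2 = (\<lambda>x. Pj {1,2} f (pm sg1 ** x))"
  define u3 where "u3 = (\<lambda>x. Pj {3,4} f (pm sg2 ** x))"
  define u4 where "u4 = Pj {5,6} f"
  have e1: "Eig {} u1" unfolding u1_def by (rule Pj_Eig)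
  have e2: "Eig {4,5} u2" unfolding u2_def using Lm1[OF Pj_Eig] sg1_S by metis
  have e3: "Eig {4,6} u3" unfolding u3_def using Lm2[OF Pj_Eig] sg2_S by metis
  have e4: "Eig {5,6} u4" unfolding u4_def by (rule Pj_Eig)
  have T: "Ti f = (\<lambda>x. u1 x + u2 x + u3 x + u4 x)" unfolding Ti_def u1_def u2_def u3_def u4_def by simp
  have P0: "Pj {} (Ti f) y = Pj {} f y" for y
    unfolding T Pj_add using Pj_same[OF e1] Pj_diff'[OF e2, of 4 "{}" 1] Pj_diff'[OF e3, of 4 "{}" 1] Pj_diff'[OF e4, of 5 "{}" 1]
    by (simp add: u1_def)
  have P45: "Pj {4,5} (Ti f) y = u2 y" for y
    unfolding T Pj_add using Pj_same[OF e2] Pj_diff'[OF e1, of 4 "{4,5}" 1] Pj_diff'[OF e3, of 5 "{4,5}" 1] Pj_diff'[OF e4, of 4 "{4,5}" 1]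
    by simp
  have P46: "Pj {4,6} (Ti f) y = u3 y" for y
    unfolding T Pj_add using Pj_same[OF e3] Pj_diff'[OF e1, of 4 "{4,6}" 1] Pj_diff'[OF e2, of 5 "{4,6}" 1] Pj_diff'[OF e4, of 4 "{4,6}" 1]
    by simp
  have P56: "Pj {5,6} (Ti f) y = Pj {5,6} f y" for y
    unfolding T Pj_add using Pj_same[OF e4] Pj_diff'[OF e1, of 5 "{5,6}" 1] Pj_diff'[OF e2, of 4 "{5,6}" 1] Pj_diff'[OF e3, of 4 "{5,6}" 1]
    by (simp add: u4_def)
  have "Tm (Ti f) x = Pj {} f x + Pj {1,2} f x + Pj {3,4} f x + Pj {5,6} f x"
    unfolding Tm_def using P0 P45 P46 P56 by (simp add: u2_def u3_def pm1_cancel pm2_cancel)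
  also have "\<dots> = f x" by (rule decomp2[OF f])
  finally show "Tm (Ti f) x = f x" .
qed

lemma Tm_inv2: "Pr2 A \<Longrightarrow> Tm f (dgs A ** x) = Tm f x"
proof -
  assume A: "Pr2 A"
  have Ev: "A \<in> Ev" by (rule Pr2_Ev[OF A])
  have c: "chi {} A = 1" "chi {1,2} A = 1" "chi {3,4} A = 1" "chi {5,6} A = 1"
    using A unfolding Pr2_def by (simp_all add: chi_empty chi_pair)
  have e2: "Eig {1,2} (\<lambda>x. Pj {4,5} f (pm sg1 ** x))" using Lm1[OF Pj_Eig] sg1_S by metis
  have e3: "Eig {3,4} (\<lambda>x. Pj {4,6} f (pm sg2 ** x))" using Lm2[OF Pj_Eig] sg2_S by metis
  show ?thesis unfolding Tm_def
    using Eig_inv[OF Pj_Eig Ev c(1)] Eig_inv[OF e2 Ev c(2)] Eig_inv[OF e3 Ev c(3)] Eig_inv[OF Pj_Eig Ev c(4)]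
    by simp
qed

lemma Ti_inv1: "Pr1 A \<Longrightarrow> Ti f (dgs A ** x) = Ti f x"
proof -
  assume A: "Pr1 A"
  have Ev: "A \<in> Ev" by (rule Pr1_Ev[OF A])
  have c: "chi {} A = 1" "chi {4,5} A = 1" "chi {4,6} A = 1" "chi {5,6} A = 1"
    using A unfolding Pr1_def by (simp_all add: chi_empty chi_pair)
  have e2: "Eig {4,5} (\<lambda>x. Pj {1,2} f (pm sg1 ** x))" using Lm1[OF Pj_Eig] sg1_S by metis
  have e3: "Eig {4,6} (\<lambda>x. Pj {3,4} f (pm sg2 ** x))" using Lm2[OF Pj_Eig] sg2_S by metis
  show ?thesis unfolding Ti_def
    using Eig_inv[OF Pj_Eig Ev c(1)] Eig_inv[OF e2 Ev c(2)] Eig_inv[OF e3 Ev c(3)] Eig_inv[OF Pj_Eig Ev c(4)]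
    by simp
qed

lemma Pj_right: "(\<And>x. f (x ** b) = f x) \<Longrightarrow> Pj S f (x ** b) = Pj S f x"
  unfolding Pj_def by (simp add: matrix_mul_assoc)

lemma Tm_right: "(\<And>x. f (x ** b) = f x) \<Longrightarrow> Tm f (x ** b) = Tm f x"
  unfolding Tm_def using Pj_right[of f b] by (simp add: matrix_mul_assoc)
lemma Ti_right: "(\<And>x. f (x ** b) = f x) \<Longrightarrow> Ti f (x ** b) = Ti f x"
  unfolding Ti_def using Pj_right[of f b] by (simp add: matrix_mul_assoc)

lemma Pj_lin: "Pj S (\<lambda>x. a * f x + b * g x) = (\<lambda>x. a * Pj S f x + b * Pj S g x)"
  by (simp add: Pj_add Pj_scale)

lemma Tm_lin: "Tm (\<lambda>x. a * f x + b * g x) = (\<lambda>x. a * Tm f x + b * Tm g x)"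
  unfolding Tm_def Pj_lin by (simp add: algebra_simps)
lemma Ti_lin: "Ti (\<lambda>x. a * f x + b * g x) = (\<lambda>x. a * Ti f x + b * Ti g x)"
  unfolding Ti_def Pj_lin by (simp add: algebra_simps)


lemma smooth_add: "smooth_SO6 f \<Longrightarrow> smooth_SO6 h \<Longrightarrow> smooth_SO6 (\<lambda>x. f x + h x)"
  using smooth_lin[of f h 1 1] by simp

lemma smooth_Pj: "smooth_SO6 f \<Longrightarrow> smooth_SO6 (Pj S f)"
  unfolding Pj_def by (rule smooth_sum) (auto intro: smooth_dgs Ev_SO6)

lemma smooth_Lm1: "smooth_SO6 u \<Longrightarrow> smooth_SO6 (\<lambda>x. u (pm sg1 ** x))"
  by (rule smooth_pm[OF _ pm1(1) sg1_inv])
lemma smooth_Lm2: "smooth_SO6 u \<Longrightarrow> smooth_SO6 (\<lambda>x. u (pm sg2 ** x))"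
  by (rule smooth_pm[OF _ pm2(1) sg2_inv])

lemma smooth_Tm: "smooth_SO6 f \<Longrightarrow> smooth_SO6 (Tm f)"
  unfolding Tm_def by (intro smooth_add smooth_Pj smooth_Lm1[OF smooth_Pj] smooth_Lm2[OF smooth_Pj])
lemma smooth_Ti: "smooth_SO6 f \<Longrightarrow> smooth_SO6 (Ti f)"
  unfolding Ti_def by (intro smooth_add smooth_Pj smooth_Lm1[OF smooth_Pj] smooth_Lm2[OF smooth_Pj])

definition EigL :: "real \<Rightarrow> (mat6 \<Rightarrow> real) \<Rightarrow> bool" where
  "EigL lam u \<longleftrightarrow> (\<forall>g\<in>SO6. laplace u g = lam * u g)"

lemma laplace_Lm: "laplace (\<lambda>x. u (M ** x)) g = laplace u (M ** g)"
  unfolding laplace_def by (simp add: matrix_mul_assoc)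

lemma eig_Lm: "EigL lam u \<Longrightarrow> M \<in> SO6 \<Longrightarrow> EigL lam (\<lambda>x. u (M ** x))"
  unfolding EigL_def laplace_Lm using SO6_mult by blast

lemma eig_add:
  assumes "smooth_SO6 u" "smooth_SO6 v" "EigL lam u" "EigL lam v"
  shows "EigL lam (\<lambda>x. u x + v x)"
  unfolding EigL_def
proof
  fix g assume g: "g \<in> SO6"
  let ?fs = "\<lambda>k::bool. if k then u else v"
  have "laplace (\<lambda>x. \<Sum>k\<in>{True, False}. 1 * ?fs k x) g = (\<Sum>k\<in>{True, False}. 1 * laplace (?fs k) g)"
    by (rule laplace_lin) (use assms g in auto)
  moreover have "(\<lambda>x. \<Sum>k\<in>{True, False}. 1 * ?fs k x) = (\<lambda>x. u x + v x)" by auto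
  ultimately show "laplace (\<lambda>x. u x + v x) g = lam * (u g + v g)"
    using assms g unfolding EigL_def by (simp add: distrib_left)
qed

lemma eig_Pj:
  assumes f: "smooth_SO6 f" "EigL lam f"
  shows "EigL lam (Pj S f)"
  unfolding EigL_def
proof
  fix g assume g: "g \<in> SO6"
  have "laplace (Pj S f) g = (\<Sum>A\<in>Ev. (chi S A / 32) * laplace (\<lambda>x. f (dgs A ** x)) g)"
    unfolding Pj_def by (rule laplace_lin) (auto intro: smooth_dgs[OF f(1)] Ev_SO6 g)
  also have "\<dots> = (\<Sum>A\<in>Ev. (chi S A / 32) * (lam * f (dgs A ** g)))"
    using f(2) g SO6_mult Ev_SO6 unfolding laplace_Lm EigL_def by (intro sum.cong) auto
  also have "\<dots> = lam * Pj S f g" unfolding Pj_def by (simp add: sum_distrib_left mult_ac)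
  finally show "laplace (Pj S f) g = lam * Pj S f g" .
qed

lemma eig_Tm: "smooth_SO6 f \<Longrightarrow> EigL lam f \<Longrightarrow> EigL lam (Tm f)"
  unfolding Tm_def
  by (intro eig_add smooth_add smooth_Pj smooth_Lm1[OF smooth_Pj] smooth_Lm2[OF smooth_Pj]
       eig_Pj eig_Lm[OF eig_Pj] pm1(1) pm2(1)) auto
lemma eig_Ti: "smooth_SO6 f \<Longrightarrow> EigL lam f \<Longrightarrow> EigL lam (Ti f)"
  unfolding Ti_def
  by (intro eig_add smooth_add smooth_Pj smooth_Lm1[OF smooth_Pj] smooth_Lm2[OF smooth_Pj]
       eig_Pj eig_Lm[OF eig_Pj] pm1(1) pm2(1)) auto

lemma smooth_vanish: "smooth_SO6 f \<Longrightarrow> x \<notin> SO6 \<Longrightarrow> f x = 0"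
  unfolding smooth_SO6_def by blast

lemma eo_char:
  assumes G: "\<Gamma> \<subseteq> SO6" "mat 1 \<in> \<Gamma>"
  shows "f \<in> eigenspace_orb \<Gamma> lam \<longleftrightarrow> smooth_SO6 f \<and> EigL lam f \<and>
     (\<forall>a\<in>\<Gamma>. \<forall>x. f (a ** x) = f x) \<and> (\<forall>b\<in>Gamma1. \<forall>x. f (x ** b) = f x)"
proof
  assume f: "f \<in> eigenspace_orb \<Gamma> lam"
  then have s: "smooth_SO6 f" and inv: "invariant \<Gamma> f" and e: "EigL lam f"
    unfolding eigenspace_orb_def EigL_def by auto
  have L: "f (a ** x) = f x" if a: "a \<in> \<Gamma>" for a x
  proof (cases "x \<in> SO6")
    case True then show ?thesis using inv a one_G1 unfolding invariant_def by (metis matrix_mul_rid)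
  next
    case False
    then have "a ** x \<notin> SO6" using SO6_mult_iff[of a x] G a by auto
    then show ?thesis using False smooth_vanish[OF s] by simp
  qed
  have R: "f (x ** b) = f x" if b: "b \<in> Gamma1" for b x
  proof (cases "x \<in> SO6")
    case True then show ?thesis using inv b G(2) unfolding invariant_def by (metis matrix_mul_lid)
  next
    case False
    then have "x ** b \<notin> SO6" using SO6_mult_iff2[of b x] Gamma1_SO6 b by auto
    then show ?thesis using False smooth_vanish[OF s] by simp
  qed
  show "smooth_SO6 f \<and> EigL lam f \<and> (\<forall>a\<in>\<Gamma>. \<forall>x. f (a ** x) = f x) \<and> (\<forall>b\<in>Gamma1. \<forall>x. f (x ** b) = f x)"
    using s e L R by blast
next
  assume "smooth_SO6 f \<and> EigL lam f \<and> (\<forall>a\<in>\<Gamma>. \<forall>x. f (a ** x) = f x) \<and> (\<forall>b\<in>Gamma1. \<forall>x. f (x ** b) = f x)"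
  then show "f \<in> eigenspace_orb \<Gamma> lam"
    unfolding eigenspace_orb_def EigL_def invariant_def by simp
qed

lemma Tm_maps:
  assumes f: "f \<in> eigenspace_orb Gamma1 lam"
  shows "Tm f \<in> eigenspace_orb Gamma2 lam"
proof -
  have F: "smooth_SO6 f" "EigL lam f" "\<forall>a\<in>Gamma1. \<forall>x. f (a ** x) = f x" "\<forall>b\<in>Gamma1. \<forall>x. f (x ** b) = f x"
    using f eo_char[OF Gamma1_SO6 one_G1] by auto
  have L: "\<forall>a\<in>Gamma2. \<forall>x. Tm f (a ** x) = Tm f x" using Tm_inv2 by (auto simp: Gamma2_eq)
  have R: "\<forall>b\<in>Gamma1. \<forall>x. Tm f (x ** b) = Tm f x" using Tm_right F(4) by blast
  show ?thesis using eo_char[OF Gamma2_SO6 one_G2] smooth_Tm[OF F(1)] eig_Tm[OF F(1,2)] L R by blast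
qed

lemma Ti_maps:
  assumes f: "f \<in> eigenspace_orb Gamma2 lam"
  shows "Ti f \<in> eigenspace_orb Gamma1 lam"
proof -
  have F: "smooth_SO6 f" "EigL lam f" "\<forall>a\<in>Gamma2. \<forall>x. f (a ** x) = f x" "\<forall>b\<in>Gamma1. \<forall>x. f (x ** b) = f x"
    using f eo_char[OF Gamma2_SO6 one_G2] by auto
  have L: "\<forall>a\<in>Gamma1. \<forall>x. Ti f (a ** x) = Ti f x" using Ti_inv1 by (auto simp: Gamma1_eq)
  have R: "\<forall>b\<in>Gamma1. \<forall>x. Ti f (x ** b) = Ti f x" using Ti_right F(4) by blast
  show ?thesis using eo_char[OF Gamma1_SO6 one_G1] smooth_Ti[OF F(1)] eig_Ti[OF F(1,2)] L R by blast
qed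

context vector_space begin
lemma dim_image_inj:
  assumes lf: "Vector_Spaces.linear scale scale f" and fi: "inj_on f (span S)"
  shows "dim (f ` S) = dim S"
proof -
  interpret lf: Vector_Spaces.linear scale scale f by (rule lf)
  obtain B where B: "B \<subseteq> S" "independent B" "S \<subseteq> span B" "card B = dim S" by (rule basis_exists)
  have spB: "span B = span S"
    using B(1,3) span_mono[OF B(1)] span_mono[OF B(3)] span_span[of B] by auto
  have ind: "independent (f ` B)"
    using lf.dependent_inj_imageD[of B] B(2) fi spB by auto
  have cB: "card (f ` B) = card B"
    using card_image inj_on_subset[OF fi] B(1) span_superset[of S] by (metis subset_trans)
  show ?thesis
  proof (rule dim_unique[OF _ _ ind])
    show "f ` B \<subseteq> f ` S" using B(1) by auto
    show "f ` S \<subseteq> span (f ` B)" using B(3) lf.span_image[of B] by auto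
    show "card (f ` B) = dim S" using cB B(4) by simp
  qed
qed
end

theorem isospectral12: "isospectral Gamma1 Gamma2"
  unfolding isospectral_def multiplicity_def
proof
  fix lam
  interpret V: vector_space "\<lambda>c (f::mat6 \<Rightarrow> real) x. c * f x"
    by unfold_locales (auto simp: fun_eq_iff algebra_simps)
  let ?s = "\<lambda>c (f::mat6 \<Rightarrow> real) x. c * f x"
  let ?V1 = "eigenspace_orb Gamma1 lam" and ?V2 = "eigenspace_orb Gamma2 lam"
  have lin: "Vector_Spaces.linear ?s ?s Tm"
  proof (unfold_locales)
    show "Tm (f + g) = Tm f + Tm g" for f g
      using Tm_lin[of 1 f 1 g] by (simp add: plus_fun_def)
    show "Tm (\<lambda>x. c * f x) = (\<lambda>x. c * Tm f x)" for c f
      using Tm_lin[of c f 0 f] by simp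
  qed
  let ?L1 = "{f. \<forall>A x. Pr1 A \<longrightarrow> f (dgs A ** x) = f x}"
  have sub: "V.subspace ?L1" unfolding V.subspace_def by (auto simp: plus_fun_def)
  have V1L: "?V1 \<subseteq> ?L1"
  proof
    fix f assume "f \<in> ?V1"
    then have "\<forall>a\<in>Gamma1. \<forall>x. f (a ** x) = f x" using eo_char[OF Gamma1_SO6 one_G1] by blast
    then show "f \<in> ?L1" by (auto simp: Gamma1_eq)
  qed
  have spL: "V.span ?V1 \<subseteq> ?L1" by (rule V.span_minimal[OF V1L sub])
  have inj: "inj_on Tm (V.span ?V1)"
  proof (rule inj_onI)
    fix f g assume fg: "f \<in> V.span ?V1" "g \<in> V.span ?V1" "Tm f = Tm g"
    have "f = Ti (Tm f)" using fg(1) spL by (subst Ti_Tm) auto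
    also have "\<dots> = Ti (Tm g)" using fg(3) by simp
    also have "\<dots> = g" using fg(2) spL by (subst Ti_Tm) auto
    finally show "f = g" .
  qed
  have img: "Tm ` ?V1 = ?V2"
  proof
    show "Tm ` ?V1 \<subseteq> ?V2" using Tm_maps by blast
    show "?V2 \<subseteq> Tm ` ?V1"
    proof
      fix f assume f: "f \<in> ?V2"
      have "\<forall>a\<in>Gamma2. \<forall>x. f (a ** x) = f x" using f eo_char[OF Gamma2_SO6 one_G2] by blast
      then have "Tm (Ti f) = f" by (intro Tm_Ti) (auto simp: Gamma2_eq)
      then show "f \<in> Tm ` ?V1" using Ti_maps[OF f] by (metis image_eqI)
    qed
  qed
  show "V.dim ?V1 = V.dim ?V2"
    using V.dim_image_inj[OF lin inj] img by simp
qed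

theorem mainTheorem5:
  shows "isospectral Gamma1 Gamma2 \<and> max_isotropy Gamma1 = 4 \<and> max_isotropy Gamma2 = 2"
  using isospectral12 max_iso1 max_iso2 by blast


end
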